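(* Let $A=\sum\{A_{ij}\mid i,j\in I\}$ be a generalized matrix ring and let $r$ be one of $r_b$ (Baer radical), $r_l$ (Levitzki radical), $r_j$ (Jacobson radical). Then $r(A)=\mathrm{g.m.}\,r(A)=\sum\{r(A_{ij})\mid i,j\in I\}$.
   Context: A generalized matrix (gm) ring: $I$ is a nonempty index set; for $i,j\in I$, $A_{ij}$ are additive groups with biadditive associative maps $A_{ij}\times A_{jl}\to A_{il}$. $A$ is the external direct sum of the $A_{ij}$ with $(xy)_{ij}=\sum_k x_{ik}y_{kj}$. A gm ideal is an ideal $B$ of $A$ with $B=\sum\{B_{ij}\}$, $B_{ij}\subseteq A_{ij}$; $\mathrm{g.m.}\,r(A)$ denotes the largest gm ideal of $A$ contained in $r(A)$. On the left, $r(A)$ is the usual ring radical of $A$. Each $A_{ij}$ is regarded as a $\Gamma$-ring $M=A_{ij}$ with $\Gamma=A_{ji}$ (ternary product $M\times\Gamma\times M\to M$ given by the gm multiplication), and $r(A_{ij})$ denotes the corresponding radical of this $\Gamma$-ring: the Baer (prime) radical, the Levitzki (locally nilpotent) radical, and the Jacobson radical of $\Gamma$-rings in the sense of Coppage–Luh and Booth. *)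

theory Defs
  imports Main "HOL-Library.Function_Algebras"
begin

definition r_ideal :: "'r::ab_group_add set \<Rightarrow> ('r \<Rightarrow> 'r \<Rightarrow> 'r) \<Rightarrow> 'r set \<Rightarrow> bool" where
  "r_ideal R p J \<longleftrightarrow> J \<subseteq> R \<and> 0 \<in> J \<and> (\<forall>x\<in>J. \<forall>y\<in>J. x - y \<in> J)
     \<and> (\<forall>x\<in>J. \<forall>r\<in>R. p x r \<in> J \<and> p r x \<in> J)"

definition r_prime_ideal :: "'r::ab_group_add set \<Rightarrow> ('r \<Rightarrow> 'r \<Rightarrow> 'r) \<Rightarrow> 'r set \<Rightarrow> bool" where
  "r_prime_ideal R p P \<longleftrightarrow> r_ideal R p P \<and> P \<noteq> R \<and>
     (\<forall>I J. r_ideal R p I \<and> r_ideal R p J \<and> (\<forall>x\<in>I. \<forall>y\<in>J. p x y \<in> P) \<longrightarrow> I \<subseteq> P \<or> J \<subseteq> P)"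

fun lprod :: "('r \<Rightarrow> 'r \<Rightarrow> 'r) \<Rightarrow> 'r \<Rightarrow> 'r list \<Rightarrow> 'r" where
  "lprod p x [] = x"
| "lprod p x (y # ys) = p x (lprod p y ys)"

text \<open>S is locally nilpotent: every finite subset generates a nilpotent subring,
  i.e. all products of some fixed length of its elements vanish.\<close>
definition r_loc_nilpotent :: "('r::ab_group_add \<Rightarrow> 'r \<Rightarrow> 'r) \<Rightarrow> 'r set \<Rightarrow> bool" where
  "r_loc_nilpotent p S \<longleftrightarrow> (\<forall>F. finite F \<and> F \<subseteq> S \<longrightarrow>
     (\<exists>n. \<forall>x xs. x \<in> F \<and> set xs \<subseteq> F \<and> length xs = n \<longrightarrow> lprod p x xs = 0))"

definition r_rqr :: "'r::ab_group_add set \<Rightarrow> ('r \<Rightarrow> 'r \<Rightarrow> 'r) \<Rightarrow> 'r \<Rightarrow> bool" where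
  "r_rqr R p x \<longleftrightarrow> (\<exists>y\<in>R. x + y - p x y = 0)"

text \<open>Baer (prime) radical: intersection of all prime ideals (R if there are none).\<close>
definition r_baer :: "'r::ab_group_add set \<Rightarrow> ('r \<Rightarrow> 'r \<Rightarrow> 'r) \<Rightarrow> 'r set" where
  "r_baer R p = R \<inter> \<Inter>{P. r_prime_ideal R p P}"

text \<open>Levitzki radical: the sum of all locally nilpotent ideals.\<close>
definition r_levitzki :: "'r::ab_group_add set \<Rightarrow> ('r \<Rightarrow> 'r \<Rightarrow> 'r) \<Rightarrow> 'r set" where
  "r_levitzki R p = R \<inter> \<Inter>{K. r_ideal R p K \<and>
     (\<forall>J. r_ideal R p J \<and> r_loc_nilpotent p J \<longrightarrow> J \<subseteq> K)}"

text \<open>Jacobson radical: the sum of all (right) quasi-regular ideals.\<close>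
definition r_jacobson :: "'r::ab_group_add set \<Rightarrow> ('r \<Rightarrow> 'r \<Rightarrow> 'r) \<Rightarrow> 'r set" where
  "r_jacobson R p = R \<inter> \<Inter>{K. r_ideal R p K \<and>
     (\<forall>J. r_ideal R p J \<and> (\<forall>x\<in>J. r_rqr R p x) \<longrightarrow> J \<subseteq> K)}"

section \<open>Gamma-rings: M, Gamma, ternary product t x g y = x g y\<close>

definition g_ideal :: "'m::ab_group_add set \<Rightarrow> 'g set \<Rightarrow> ('m \<Rightarrow> 'g \<Rightarrow> 'm \<Rightarrow> 'm) \<Rightarrow> 'm set \<Rightarrow> bool" where
  "g_ideal M G t J \<longleftrightarrow> J \<subseteq> M \<and> 0 \<in> J \<and> (\<forall>x\<in>J. \<forall>y\<in>J. x - y \<in> J)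
     \<and> (\<forall>x\<in>J. \<forall>g\<in>G. \<forall>m\<in>M. t x g m \<in> J \<and> t m g x \<in> J)"

definition g_prime_ideal :: "'m::ab_group_add set \<Rightarrow> 'g set \<Rightarrow> ('m \<Rightarrow> 'g \<Rightarrow> 'm \<Rightarrow> 'm) \<Rightarrow> 'm set \<Rightarrow> bool" where
  "g_prime_ideal M G t P \<longleftrightarrow> g_ideal M G t P \<and> P \<noteq> M \<and>
     (\<forall>I J. g_ideal M G t I \<and> g_ideal M G t J \<and> (\<forall>x\<in>I. \<forall>g\<in>G. \<forall>y\<in>J. t x g y \<in> P)
        \<longrightarrow> I \<subseteq> P \<or> J \<subseteq> P)"

fun gprod :: "('m \<Rightarrow> 'g \<Rightarrow> 'm \<Rightarrow> 'm) \<Rightarrow> 'm \<Rightarrow> ('g \<times> 'm) list \<Rightarrow> 'm" where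
  "gprod t x [] = x"
| "gprod t x ((g, y) # ys) = t x g (gprod t y ys)"

text \<open>S locally nilpotent (Coppage-Luh): for finite F in S and finite Phi in Gamma,
  (F Phi)^n F = 0 for some n.\<close>
definition g_loc_nilpotent :: "'g set \<Rightarrow> ('m::ab_group_add \<Rightarrow> 'g \<Rightarrow> 'm \<Rightarrow> 'm) \<Rightarrow> 'm set \<Rightarrow> bool" where
  "g_loc_nilpotent G t S \<longleftrightarrow> (\<forall>F \<Phi>. finite F \<and> F \<subseteq> S \<and> finite \<Phi> \<and> \<Phi> \<subseteq> G \<longrightarrow>
     (\<exists>n. \<forall>x ys. x \<in> F \<and> set ys \<subseteq> \<Phi> \<times> F \<and> length ys = n \<longrightarrow> gprod t x ys = 0))"

definition g_rqr :: "'m::ab_group_add set \<Rightarrow> 'g set \<Rightarrow> ('m \<Rightarrow> 'g \<Rightarrow> 'm \<Rightarrow> 'm) \<Rightarrow> 'm \<Rightarrow> bool" where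
  "g_rqr M G t x \<longleftrightarrow> (\<forall>g\<in>G. \<exists>y\<in>M. x + y - t x g y = 0)"

definition g_baer :: "'m::ab_group_add set \<Rightarrow> 'g set \<Rightarrow> ('m \<Rightarrow> 'g \<Rightarrow> 'm \<Rightarrow> 'm) \<Rightarrow> 'm set" where
  "g_baer M G t = M \<inter> \<Inter>{P. g_prime_ideal M G t P}"

definition g_levitzki :: "'m::ab_group_add set \<Rightarrow> 'g set \<Rightarrow> ('m \<Rightarrow> 'g \<Rightarrow> 'm \<Rightarrow> 'm) \<Rightarrow> 'm set" where
  "g_levitzki M G t = M \<inter> \<Inter>{K. g_ideal M G t K \<and>
     (\<forall>J. g_ideal M G t J \<and> g_loc_nilpotent G t J \<longrightarrow> J \<subseteq> K)}"

definition g_jacobson :: "'m::ab_group_add set \<Rightarrow> 'g set \<Rightarrow> ('m \<Rightarrow> 'g \<Rightarrow> 'm \<Rightarrow> 'm) \<Rightarrow> 'm set" where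
  "g_jacobson M G t = M \<inter> \<Inter>{K. g_ideal M G t K \<and>
     (\<forall>J. g_ideal M G t J \<and> (\<forall>x\<in>J. g_rqr M G t x) \<longrightarrow> J \<subseteq> K)}"

datatype rad_kind = Baer | Levitzki | Jacobson

fun ring_rad :: "rad_kind \<Rightarrow> 'r::ab_group_add set \<Rightarrow> ('r \<Rightarrow> 'r \<Rightarrow> 'r) \<Rightarrow> 'r set" where
  "ring_rad Baer = r_baer"
| "ring_rad Levitzki = r_levitzki"
| "ring_rad Jacobson = r_jacobson"

fun gamma_rad :: "rad_kind \<Rightarrow> 'm::ab_group_add set \<Rightarrow> 'g set \<Rightarrow> ('m \<Rightarrow> 'g \<Rightarrow> 'm \<Rightarrow> 'm) \<Rightarrow> 'm set" where
  "gamma_rad Baer = g_baer"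
| "gamma_rad Levitzki = g_levitzki"
| "gamma_rad Jacobson = g_jacobson"

text \<open>Index set I; components C i j (additive subgroups of an ambient abelian group 'a);
  mu i j l x y is the product A_ij x A_jl -> A_il.\<close>
definition gm_ring :: "'i set \<Rightarrow> ('i \<Rightarrow> 'i \<Rightarrow> 'a::ab_group_add set)
    \<Rightarrow> ('i \<Rightarrow> 'i \<Rightarrow> 'i \<Rightarrow> 'a \<Rightarrow> 'a \<Rightarrow> 'a) \<Rightarrow> bool" where
  "gm_ring I C mu \<longleftrightarrow> I \<noteq> {} \<and>
    (\<forall>i\<in>I. \<forall>j\<in>I. 0 \<in> C i j \<and> (\<forall>x\<in>C i j. \<forall>y\<in>C i j. x - y \<in> C i j)) \<and>
    (\<forall>i\<in>I. \<forall>j\<in>I. \<forall>l\<in>I. \<forall>x\<in>C i j. \<forall>y\<in>C j l. mu i j l x y \<in> C i l) \<and>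
    (\<forall>i\<in>I. \<forall>j\<in>I. \<forall>l\<in>I. \<forall>x\<in>C i j. \<forall>x'\<in>C i j. \<forall>y\<in>C j l. \<forall>y'\<in>C j l.
        mu i j l (x + x') y = mu i j l x y + mu i j l x' y \<and>
        mu i j l x (y + y') = mu i j l x y + mu i j l x y') \<and>
    (\<forall>i\<in>I. \<forall>j\<in>I. \<forall>k\<in>I. \<forall>l\<in>I. \<forall>x\<in>C i j. \<forall>y\<in>C j k. \<forall>z\<in>C k l.
        mu i k l (mu i j k x y) z = mu i j l x (mu j k l y z))"

text \<open>Elements of the external direct sum A: finitely supported matrices with entries in C i j.\<close>
definition gm_carrier :: "'i set \<Rightarrow> ('i \<Rightarrow> 'i \<Rightarrow> 'a::ab_group_add set) \<Rightarrow> ('i \<Rightarrow> 'i \<Rightarrow> 'a) set" where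
  "gm_carrier I C = {x. (\<forall>i j. x i j \<in> (if i \<in> I \<and> j \<in> I then C i j else {0}))
      \<and> finite {(i, j). x i j \<noteq> 0}}"

definition gm_mult :: "'i set \<Rightarrow> ('i \<Rightarrow> 'i \<Rightarrow> 'i \<Rightarrow> 'a \<Rightarrow> 'a \<Rightarrow> 'a)
    \<Rightarrow> ('i \<Rightarrow> 'i \<Rightarrow> 'a::ab_group_add) \<Rightarrow> ('i \<Rightarrow> 'i \<Rightarrow> 'a) \<Rightarrow> ('i \<Rightarrow> 'i \<Rightarrow> 'a)" where
  "gm_mult I mu x y = (\<lambda>i j. if i \<in> I \<and> j \<in> I
      then (\<Sum>k\<in>{k\<in>I. x i k \<noteq> 0}. mu i k j (x i k) (y k j)) else 0)"

text \<open>The sum of subsets S i j of the components: the set of elements of A whose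
  (i,j)-component lies in S i j.\<close>
definition gm_sum :: "'i set \<Rightarrow> ('i \<Rightarrow> 'i \<Rightarrow> 'a::ab_group_add set) \<Rightarrow> ('i \<Rightarrow> 'i \<Rightarrow> 'a set)
    \<Rightarrow> ('i \<Rightarrow> 'i \<Rightarrow> 'a) set" where
  "gm_sum I C S = {x \<in> gm_carrier I C. \<forall>i\<in>I. \<forall>j\<in>I. x i j \<in> S i j}"

definition gm_ideal :: "'i set \<Rightarrow> ('i \<Rightarrow> 'i \<Rightarrow> 'a::ab_group_add set)
    \<Rightarrow> ('i \<Rightarrow> 'i \<Rightarrow> 'i \<Rightarrow> 'a \<Rightarrow> 'a \<Rightarrow> 'a) \<Rightarrow> ('i \<Rightarrow> 'i \<Rightarrow> 'a) set \<Rightarrow> bool" where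
  "gm_ideal I C mu B \<longleftrightarrow> r_ideal (gm_carrier I C) (gm_mult I mu) B \<and>
     (\<exists>S. (\<forall>i\<in>I. \<forall>j\<in>I. S i j \<subseteq> C i j) \<and> B = gm_sum I C S)"

definition gm_rad :: "rad_kind \<Rightarrow> 'i set \<Rightarrow> ('i \<Rightarrow> 'i \<Rightarrow> 'a::ab_group_add set)
    \<Rightarrow> ('i \<Rightarrow> 'i \<Rightarrow> 'i \<Rightarrow> 'a \<Rightarrow> 'a \<Rightarrow> 'a) \<Rightarrow> ('i \<Rightarrow> 'i \<Rightarrow> 'a) set" where
  "gm_rad k I C mu = ring_rad k (gm_carrier I C) (gm_mult I mu)"

text \<open>g.m. r(A): the largest gm ideal of A contained in r(A).\<close>
definition gm_part_rad :: "rad_kind \<Rightarrow> 'i set \<Rightarrow> ('i \<Rightarrow> 'i \<Rightarrow> 'a::ab_group_add set)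
    \<Rightarrow> ('i \<Rightarrow> 'i \<Rightarrow> 'i \<Rightarrow> 'a \<Rightarrow> 'a \<Rightarrow> 'a) \<Rightarrow> ('i \<Rightarrow> 'i \<Rightarrow> 'a) set" where
  "gm_part_rad k I C mu = (THE B. gm_ideal I C mu B \<and> B \<subseteq> gm_rad k I C mu \<and>
     (\<forall>B'. gm_ideal I C mu B' \<and> B' \<subseteq> gm_rad k I C mu \<longrightarrow> B' \<subseteq> B))"

text \<open>A_ij as a Gamma-ring with M = A_ij, Gamma = A_ji, x g y = (x g) y.\<close>
definition gm_tern :: "('i \<Rightarrow> 'i \<Rightarrow> 'i \<Rightarrow> 'a \<Rightarrow> 'a \<Rightarrow> 'a) \<Rightarrow> 'i \<Rightarrow> 'i \<Rightarrow> 'a \<Rightarrow> 'a \<Rightarrow> 'a \<Rightarrow> 'a" where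
  "gm_tern mu i j x g y = mu i i j (mu i j i x g) y"

definition comp_rad :: "rad_kind \<Rightarrow> ('i \<Rightarrow> 'i \<Rightarrow> 'a::ab_group_add set)
    \<Rightarrow> ('i \<Rightarrow> 'i \<Rightarrow> 'i \<Rightarrow> 'a \<Rightarrow> 'a \<Rightarrow> 'a) \<Rightarrow> 'i \<Rightarrow> 'i \<Rightarrow> 'a set" where
  "comp_rad k C mu i j = gamma_rad k (C i j) (C j i) (gm_tern mu i j)"

end

theory Submission
  imports Defs
begin

definition E :: "'i \<Rightarrow> 'i \<Rightarrow> 'a::zero \<Rightarrow> ('i \<Rightarrow> 'i \<Rightarrow> 'a)" where
  "E i j a = (\<lambda>k l. if k = i \<and> l = j then a else 0)"

definition supp2 :: "('i \<Rightarrow> 'i \<Rightarrow> 'a::zero) \<Rightarrow> ('i \<times> 'i) set" where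
  "supp2 x = {(i, j). x i j \<noteq> 0}"

definition cs :: "('i \<Rightarrow> 'i \<Rightarrow> 'a::zero) \<Rightarrow> 'i set" where
  "cs x = {k. \<exists>i. x i k \<noteq> 0}"

locale gmr =
  fixes I :: "'i set" and C :: "'i \<Rightarrow> 'i \<Rightarrow> 'a::ab_group_add set"
    and mu :: "'i \<Rightarrow> 'i \<Rightarrow> 'i \<Rightarrow> 'a \<Rightarrow> 'a \<Rightarrow> 'a"
  assumes gm: "gm_ring I C mu"
begin

abbreviation "Acar \<equiv> gm_carrier I C"
abbreviation "pm \<equiv> gm_mult I mu"

lemma C0: "i \<in> I \<Longrightarrow> j \<in> I \<Longrightarrow> 0 \<in> C i j"
  using gm unfolding gm_ring_def by (elim conjE) (meson)

lemma Cdiff: "i \<in> I \<Longrightarrow> j \<in> I \<Longrightarrow> x \<in> C i j \<Longrightarrow> y \<in> C i j \<Longrightarrow> x - y \<in> C i j"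
  using gm unfolding gm_ring_def by (elim conjE) (meson)

lemma Cneg: "i \<in> I \<Longrightarrow> j \<in> I \<Longrightarrow> y \<in> C i j \<Longrightarrow> - y \<in> C i j"
  using Cdiff[of i j 0 y] C0 by simp

lemma Cadd: "i \<in> I \<Longrightarrow> j \<in> I \<Longrightarrow> x \<in> C i j \<Longrightarrow> y \<in> C i j \<Longrightarrow> x + y \<in> C i j"
  using Cdiff[of i j x "- y"] Cneg by simp

lemma Csum: "i \<in> I \<Longrightarrow> j \<in> I \<Longrightarrow> (\<And>k. k \<in> K \<Longrightarrow> f k \<in> C i j) \<Longrightarrow> sum f K \<in> C i j"
proof (induction K rule: infinite_finite_induct)
  case (infinite A) then show ?case using C0 by simp
next
  case empty then show ?case using C0 by simp
next
  case (insert x F) then show ?case using Cadd by simp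
qed

lemma mu_closed: "i \<in> I \<Longrightarrow> j \<in> I \<Longrightarrow> l \<in> I \<Longrightarrow> x \<in> C i j \<Longrightarrow> y \<in> C j l \<Longrightarrow> mu i j l x y \<in> C i l"
  using gm unfolding gm_ring_def by (elim conjE) (meson)

lemma mu_addl: "i \<in> I \<Longrightarrow> j \<in> I \<Longrightarrow> l \<in> I \<Longrightarrow> x \<in> C i j \<Longrightarrow> x' \<in> C i j \<Longrightarrow> y \<in> C j l \<Longrightarrow>
   mu i j l (x + x') y = mu i j l x y + mu i j l x' y"
  using gm unfolding gm_ring_def by (elim conjE) (meson)

lemma mu_addr: "i \<in> I \<Longrightarrow> j \<in> I \<Longrightarrow> l \<in> I \<Longrightarrow> x \<in> C i j \<Longrightarrow> y \<in> C j l \<Longrightarrow> y' \<in> C j l \<Longrightarrow>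
   mu i j l x (y + y') = mu i j l x y + mu i j l x y'"
  using gm unfolding gm_ring_def by (elim conjE) (meson)

lemma mu_assoc: "i \<in> I \<Longrightarrow> j \<in> I \<Longrightarrow> k \<in> I \<Longrightarrow> l \<in> I \<Longrightarrow> x \<in> C i j \<Longrightarrow> y \<in> C j k \<Longrightarrow> z \<in> C k l \<Longrightarrow>
   mu i k l (mu i j k x y) z = mu i j l x (mu j k l y z)"
  using gm unfolding gm_ring_def by (elim conjE) (meson)

lemma mu_0l: "i \<in> I \<Longrightarrow> j \<in> I \<Longrightarrow> l \<in> I \<Longrightarrow> y \<in> C j l \<Longrightarrow> mu i j l 0 y = 0"
  using mu_addl[of i j l 0 0 y] C0 by simp

lemma mu_0r: "i \<in> I \<Longrightarrow> j \<in> I \<Longrightarrow> l \<in> I \<Longrightarrow> x \<in> C i j \<Longrightarrow> mu i j l x 0 = 0"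
  using mu_addr[of i j l x 0 0] C0 by simp

lemma mu_diffl: "i \<in> I \<Longrightarrow> j \<in> I \<Longrightarrow> l \<in> I \<Longrightarrow> x \<in> C i j \<Longrightarrow> x' \<in> C i j \<Longrightarrow> y \<in> C j l \<Longrightarrow>
   mu i j l (x - x') y = mu i j l x y - mu i j l x' y"
  using mu_addl[of i j l "x - x'" x' y] Cdiff by (simp add: algebra_simps)

lemma mu_diffr: "i \<in> I \<Longrightarrow> j \<in> I \<Longrightarrow> l \<in> I \<Longrightarrow> x \<in> C i j \<Longrightarrow> y \<in> C j l \<Longrightarrow> y' \<in> C j l \<Longrightarrow>
   mu i j l x (y - y') = mu i j l x y - mu i j l x y'"
  using mu_addr[of i j l x "y - y'" y'] Cdiff by (simp add: algebra_simps)

lemma mu_negl: "i \<in> I \<Longrightarrow> j \<in> I \<Longrightarrow> l \<in> I \<Longrightarrow> x \<in> C i j \<Longrightarrow> y \<in> C j l \<Longrightarrow> mu i j l (- x) y = - mu i j l x y"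
  using mu_diffl[of i j l 0 x y] C0 mu_0l by simp

lemma mu_negr: "i \<in> I \<Longrightarrow> j \<in> I \<Longrightarrow> l \<in> I \<Longrightarrow> x \<in> C i j \<Longrightarrow> y \<in> C j l \<Longrightarrow> mu i j l x (- y) = - mu i j l x y"
  using mu_diffr[of i j l x 0 y] C0 mu_0r by simp

lemma mu_suml: "i \<in> I \<Longrightarrow> j \<in> I \<Longrightarrow> l \<in> I \<Longrightarrow> (\<And>k. k \<in> K \<Longrightarrow> f k \<in> C i j) \<Longrightarrow> y \<in> C j l \<Longrightarrow>
   mu i j l (sum f K) y = (\<Sum>k\<in>K. mu i j l (f k) y)"
proof (induction K rule: infinite_finite_induct)
  case (infinite A) then show ?case using mu_0l by simp
next
  case empty then show ?case using mu_0l by simp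
next
  case (insert a F)
  have "f a \<in> C i j" "sum f F \<in> C i j" using insert.prems by (auto intro!: Csum)
  then show ?case using insert by (simp add: mu_addl)
qed

lemma mu_sumr: "i \<in> I \<Longrightarrow> j \<in> I \<Longrightarrow> l \<in> I \<Longrightarrow> (\<And>k. k \<in> K \<Longrightarrow> f k \<in> C j l) \<Longrightarrow> x \<in> C i j \<Longrightarrow>
   mu i j l x (sum f K) = (\<Sum>k\<in>K. mu i j l x (f k))"
proof (induction K rule: infinite_finite_induct)
  case (infinite A) then show ?case using mu_0r by simp
next
  case empty then show ?case using mu_0r by simp
next
  case (insert a F)
  have "f a \<in> C j l" "sum f F \<in> C j l" using insert.prems by (auto intro!: Csum)
  then show ?case using insert by (simp add: mu_addr)
qed

lemma car_entry: "x \<in> Acar \<Longrightarrow> i \<in> I \<Longrightarrow> j \<in> I \<Longrightarrow> x i j \<in> C i j"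
  unfolding gm_carrier_def by (metis (mono_tags, lifting) mem_Collect_eq)

lemma car_out: "x \<in> Acar \<Longrightarrow> \<not> (i \<in> I \<and> j \<in> I) \<Longrightarrow> x i j = 0"
  unfolding gm_carrier_def by (metis (mono_tags, lifting) mem_Collect_eq singletonD)

lemma car_fin: "x \<in> Acar \<Longrightarrow> finite (supp2 x)"
  unfolding gm_carrier_def supp2_def by blast

lemma carI: "(\<And>i j. i \<in> I \<Longrightarrow> j \<in> I \<Longrightarrow> x i j \<in> C i j) \<Longrightarrow> (\<And>i j. \<not> (i \<in> I \<and> j \<in> I) \<Longrightarrow> x i j = 0)
   \<Longrightarrow> finite (supp2 x) \<Longrightarrow> x \<in> Acar"
  unfolding gm_carrier_def supp2_def by auto

lemma cs_fin: "x \<in> Acar \<Longrightarrow> finite (cs x)"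
proof -
  assume "x \<in> Acar"
  then have "finite (snd ` supp2 x)" using car_fin by blast
  moreover have "cs x = snd ` supp2 x" unfolding cs_def supp2_def by force
  ultimately show ?thesis by simp
qed

lemma cs_sub: "x \<in> Acar \<Longrightarrow> cs x \<subseteq> I"
  unfolding cs_def using car_out by blast

lemma pm_out: "\<not> (i \<in> I \<and> j \<in> I) \<Longrightarrow> pm x y i j = 0"
  unfolding gm_mult_def by auto

lemma pm_formula:
  assumes x: "x \<in> Acar" and y: "y \<in> Acar" and K: "finite K" "K \<subseteq> I" "cs x \<subseteq> K"
    and ij: "i \<in> I" "j \<in> I"
  shows "pm x y i j = (\<Sum>k\<in>K. mu i k j (x i k) (y k j))"
proof -
  have "pm x y i j = (\<Sum>k\<in>{k\<in>I. x i k \<noteq> 0}. mu i k j (x i k) (y k j))"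
    unfolding gm_mult_def using ij by simp
  also have "\<dots> = (\<Sum>k\<in>K. mu i k j (x i k) (y k j))"
  proof (rule sum.mono_neutral_left)
    show "finite K" by fact
    show "{k \<in> I. x i k \<noteq> 0} \<subseteq> K" using K unfolding cs_def by blast
    show "\<forall>k\<in>K - {k \<in> I. x i k \<noteq> 0}. mu i k j (x i k) (y k j) = 0"
      using K ij mu_0l car_entry[OF y] by auto
  qed
  finally show ?thesis .
qed

lemma car_zero: "0 \<in> Acar"
  by (rule carI) (auto simp: C0 supp2_def)

lemma supp2_diff: "supp2 ((x::'i \<Rightarrow> 'i \<Rightarrow> 'a) - y) \<subseteq> supp2 x \<union> supp2 y"
  unfolding supp2_def by (auto simp: fun_diff_def)

lemma car_diff: "x \<in> Acar \<Longrightarrow> y \<in> Acar \<Longrightarrow> x - y \<in> Acar"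
proof (rule carI)
  fix i j assume "x \<in> Acar" "y \<in> Acar" "i \<in> I" "j \<in> I"
  then show "(x - y) i j \<in> C i j" using car_entry Cdiff by simp
next
  fix i j assume "x \<in> Acar" "y \<in> Acar" "\<not> (i \<in> I \<and> j \<in> I)"
  then show "(x - y) i j = 0" using car_out[of x i j] car_out[of y i j] by simp
next
  assume "x \<in> Acar" "y \<in> Acar"
  then show "finite (supp2 (x - y))" by (meson car_fin finite_UnI finite_subset supp2_diff)
qed

lemma car_neg: "y \<in> Acar \<Longrightarrow> - y \<in> Acar"
  using car_diff[of 0 y] car_zero by simp

lemma car_add: "x \<in> Acar \<Longrightarrow> y \<in> Acar \<Longrightarrow> x + y \<in> Acar"
  using car_diff[of x "- y"] car_neg by simp

lemma pm_closed:
  assumes x: "x \<in> Acar" and y: "y \<in> Acar"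
  shows "pm x y \<in> Acar"
proof (rule carI)
  fix i j assume ij: "i \<in> I" "j \<in> I"
  show "pm x y i j \<in> C i j"
    using pm_formula[OF x y cs_fin[OF x] cs_sub[OF x] subset_refl ij] ij
    by (auto intro!: Csum mu_closed car_entry[OF x] car_entry[OF y] dest: cs_sub[OF x, THEN subsetD])
next
  fix i j assume "\<not> (i \<in> I \<and> j \<in> I)" then show "pm x y i j = 0" by (rule pm_out)
next
  have "supp2 (pm x y) \<subseteq> fst ` supp2 x \<times> cs y"
  proof
    fix q assume q: "q \<in> supp2 (pm x y)"
    obtain i j where qij: "q = (i, j)" by force
    have nz: "pm x y i j \<noteq> 0" using q qij unfolding supp2_def by auto
    then have ij: "i \<in> I" "j \<in> I" using pm_out by blast+
    have "pm x y i j = (\<Sum>k\<in>cs x. mu i k j (x i k) (y k j))"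
      by (rule pm_formula[OF x y cs_fin[OF x] cs_sub[OF x] subset_refl ij])
    with nz obtain k where k: "k \<in> cs x" "mu i k j (x i k) (y k j) \<noteq> 0"
      by (metis (no_types, lifting) sum.neutral)
    have kI: "k \<in> I" using k cs_sub[OF x] by blast
    have "x i k \<noteq> 0" using k(2) mu_0l ij kI car_entry[OF y] by auto
    moreover have "y k j \<noteq> 0" using k(2) mu_0r ij kI car_entry[OF x] by auto
    ultimately show "q \<in> fst ` supp2 x \<times> cs y" unfolding qij supp2_def cs_def by force
  qed
  moreover have "finite (fst ` supp2 x \<times> cs y)" using car_fin[OF x] cs_fin[OF y] by simp
  ultimately show "finite (supp2 (pm x y))" by (rule finite_subset)
qed

end

locale rng =
  fixes R :: "'r::ab_group_add set" and p :: "'r \<Rightarrow> 'r \<Rightarrow> 'r"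
  assumes zero: "0 \<in> R"
    and diff: "x \<in> R \<Longrightarrow> y \<in> R \<Longrightarrow> x - y \<in> R"
    and mult: "x \<in> R \<Longrightarrow> y \<in> R \<Longrightarrow> p x y \<in> R"
    and ldist: "x \<in> R \<Longrightarrow> y \<in> R \<Longrightarrow> z \<in> R \<Longrightarrow> p (x + y) z = p x z + p y z"
    and rdist: "x \<in> R \<Longrightarrow> y \<in> R \<Longrightarrow> z \<in> R \<Longrightarrow> p x (y + z) = p x y + p x z"
    and assoc: "x \<in> R \<Longrightarrow> y \<in> R \<Longrightarrow> z \<in> R \<Longrightarrow> p (p x y) z = p x (p y z)"
begin

lemma neg: "y \<in> R \<Longrightarrow> - y \<in> R"
  using diff[of 0 y] zero by simp

lemma add: "x \<in> R \<Longrightarrow> y \<in> R \<Longrightarrow> x + y \<in> R"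
  using diff[of x "- y"] neg by simp

lemma p0l: "y \<in> R \<Longrightarrow> p 0 y = 0"
  using ldist[of 0 0 y] zero by simp

lemma p0r: "x \<in> R \<Longrightarrow> p x 0 = 0"
  using rdist[of x 0 0] zero by simp

lemma ldiff: "x \<in> R \<Longrightarrow> y \<in> R \<Longrightarrow> z \<in> R \<Longrightarrow> p (x - y) z = p x z - p y z"
  using ldist[of "x - y" y z] diff by (simp add: algebra_simps)

lemma rdiff: "x \<in> R \<Longrightarrow> y \<in> R \<Longrightarrow> z \<in> R \<Longrightarrow> p x (y - z) = p x y - p x z"
  using rdist[of x "y - z" z] diff by (simp add: algebra_simps)

lemma lneg: "x \<in> R \<Longrightarrow> z \<in> R \<Longrightarrow> p (- x) z = - p x z"
  using ldiff[of 0 x z] zero p0l by simp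

lemma rneg: "x \<in> R \<Longrightarrow> z \<in> R \<Longrightarrow> p x (- z) = - p x z"
  using rdiff[of x 0 z] zero p0r by simp

lemma ideal_add: "r_ideal R p J \<Longrightarrow> x \<in> J \<Longrightarrow> y \<in> J \<Longrightarrow> x + y \<in> J"
  unfolding r_ideal_def by (metis diff_0 diff_minus_eq_add)

lemma ideal_neg: "r_ideal R p J \<Longrightarrow> y \<in> J \<Longrightarrow> - y \<in> J"
  unfolding r_ideal_def by (metis diff_0)

lemma ideal_R: "r_ideal R p R"
  unfolding r_ideal_def using zero diff mult by blast

lemma ideal_Inter: "(\<And>K. K \<in> F \<Longrightarrow> r_ideal R p K) \<Longrightarrow> r_ideal R p (R \<inter> \<Inter> F)"
  unfolding r_ideal_def using zero diff mult by blast

end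

context gmr
begin

lemma cs_add: "cs ((x::'i \<Rightarrow> 'i \<Rightarrow> 'a) + y) \<subseteq> cs x \<union> cs y"
  unfolding cs_def by auto

lemma pm_ldist:
  assumes x: "x \<in> Acar" and y: "y \<in> Acar" and z: "z \<in> Acar"
  shows "pm (x + y) z = pm x z + pm y z"
proof (rule ext, rule ext)
  fix i j
  show "pm (x + y) z i j = (pm x z + pm y z) i j"
  proof (cases "i \<in> I \<and> j \<in> I")
    case True
    let ?K = "cs x \<union> cs y"
    have K: "finite ?K" "?K \<subseteq> I" using cs_fin cs_sub x y by auto
    have xy: "x + y \<in> Acar" using car_add x y by blast
    have "pm (x + y) z i j = (\<Sum>k\<in>?K. mu i k j ((x + y) i k) (z k j))"
      using pm_formula[OF xy z K] cs_add True by blast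
    also have "\<dots> = (\<Sum>k\<in>?K. mu i k j (x i k) (z k j) + mu i k j (y i k) (z k j))"
      apply (rule sum.cong, simp)
      using True K by (auto intro!: mu_addl car_entry x y z)
    also have "\<dots> = pm x z i j + pm y z i j"
      using pm_formula[OF x z K] pm_formula[OF y z K] True by (simp add: sum.distrib)
    finally show ?thesis by simp
  next
    case False then show ?thesis using pm_out by simp
  qed
qed

lemma pm_rdist:
  assumes x: "x \<in> Acar" and y: "y \<in> Acar" and z: "z \<in> Acar"
  shows "pm x (y + z) = pm x y + pm x z"
proof (rule ext, rule ext)
  fix i j
  show "pm x (y + z) i j = (pm x y + pm x z) i j"
  proof (cases "i \<in> I \<and> j \<in> I")
    case True
    have K: "finite (cs x)" "cs x \<subseteq> I" using cs_fin cs_sub x by auto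
    have yz: "y + z \<in> Acar" using car_add y z by blast
    have "pm x (y + z) i j = (\<Sum>k\<in>cs x. mu i k j (x i k) ((y + z) k j))"
      using pm_formula[OF x yz K] True by blast
    also have "\<dots> = (\<Sum>k\<in>cs x. mu i k j (x i k) (y k j) + mu i k j (x i k) (z k j))"
      apply (rule sum.cong, simp)
      using True K by (auto intro!: mu_addr car_entry x y z)
    also have "\<dots> = pm x y i j + pm x z i j"
      using pm_formula[OF x y K] pm_formula[OF x z K] True by (simp add: sum.distrib)
    finally show ?thesis by simp
  next
    case False then show ?thesis using pm_out by simp
  qed
qed

lemma pm_assoc:
  assumes x: "x \<in> Acar" and y: "y \<in> Acar" and z: "z \<in> Acar"
  shows "pm (pm x y) z = pm x (pm y z)"
proof (rule ext, rule ext)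
  fix i l
  show "pm (pm x y) z i l = pm x (pm y z) i l"
  proof (cases "i \<in> I \<and> l \<in> I")
    case True
    have xy: "pm x y \<in> Acar" and yz: "pm y z \<in> Acar" using pm_closed x y z by auto
    let ?K = "cs x \<union> cs y \<union> cs (pm x y)"
    have K: "finite ?K" "?K \<subseteq> I" using cs_fin cs_sub x y xy by auto
    have Kx: "cs x \<subseteq> ?K" and Ky: "cs y \<subseteq> ?K" and Kxy: "cs (pm x y) \<subseteq> ?K" by auto
    have "pm (pm x y) z i l = (\<Sum>k\<in>?K. mu i k l (pm x y i k) (z k l))"
      using pm_formula[OF xy z K Kxy] True by blast
    also have "\<dots> = (\<Sum>k\<in>?K. mu i k l (\<Sum>m\<in>?K. mu i m k (x i m) (y m k)) (z k l))"
      apply (rule sum.cong, simp)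
      using pm_formula[OF x y K Kx] True K by auto
    also have "\<dots> = (\<Sum>k\<in>?K. \<Sum>m\<in>?K. mu i k l (mu i m k (x i m) (y m k)) (z k l))"
      apply (rule sum.cong, simp)
      using True K by (intro mu_suml) (auto intro!: mu_closed intro: car_entry[OF x] car_entry[OF y] car_entry[OF z])
    also have "\<dots> = (\<Sum>k\<in>?K. \<Sum>m\<in>?K. mu i m l (x i m) (mu m k l (y m k) (z k l)))"
      apply (rule sum.cong, simp)+
      using True K by (intro mu_assoc) (auto intro: car_entry[OF x] car_entry[OF y] car_entry[OF z])
    also have "\<dots> = (\<Sum>m\<in>?K. \<Sum>k\<in>?K. mu i m l (x i m) (mu m k l (y m k) (z k l)))"
      by (rule sum.swap)
    also have "\<dots> = (\<Sum>m\<in>?K. mu i m l (x i m) (\<Sum>k\<in>?K. mu m k l (y m k) (z k l)))"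
      apply (rule sum.cong, simp)
      using True K by (intro mu_sumr[symmetric]) (auto intro!: mu_closed intro: car_entry[OF x] car_entry[OF y] car_entry[OF z])
    also have "\<dots> = (\<Sum>m\<in>?K. mu i m l (x i m) (pm y z m l))"
      apply (rule sum.cong, simp)
      using pm_formula[OF y z K Ky] True K by auto
    also have "\<dots> = pm x (pm y z) i l"
      using pm_formula[OF x yz K Kx] True by simp
    finally show ?thesis .
  next
    case False then show ?thesis using pm_out by simp
  qed
qed

lemma A_rng: "rng Acar pm"
  by unfold_locales (auto intro: car_zero car_diff pm_closed pm_ldist pm_rdist pm_assoc)

lemma Cii_rng: "i \<in> I \<Longrightarrow> rng (C i i) (mu i i i)"
  by unfold_locales (auto intro: C0 Cdiff mu_closed mu_addl mu_addr mu_assoc)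

end

context gmr
begin

lemma E_car: "i \<in> I \<Longrightarrow> j \<in> I \<Longrightarrow> a \<in> C i j \<Longrightarrow> E i j a \<in> Acar"
proof (rule carI)
  show "finite (supp2 (E i j a))"
    by (rule finite_subset[of _ "{(i, j)}"]) (auto simp: supp2_def E_def)
qed (auto simp: E_def C0)

lemma cs_E: "cs (E i j a) \<subseteq> {j}"
  unfolding cs_def E_def by auto

lemma E_0: "E i j 0 = 0"
  unfolding E_def by (auto simp: fun_eq_iff)

lemma E_diff: "E i j (a::'a) - E i j b = E i j (a - b)"
  unfolding E_def by (auto simp: fun_eq_iff)

lemma E_add: "E i j (a::'a) + E i j b = E i j (a + b)"
  unfolding E_def by (auto simp: fun_eq_iff)

lemma E_inj: "E i j a = E i j b \<Longrightarrow> a = b"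
  unfolding E_def by (metis)

lemma E_at: "E i j a i j = a"
  unfolding E_def by simp

lemma pm_single:
  assumes x: "x \<in> Acar" and y: "y \<in> Acar" and c: "c \<in> I" and rl: "r \<in> I" "l \<in> I"
    and z: "\<And>k. k \<in> I \<Longrightarrow> k \<noteq> c \<Longrightarrow> x r k = 0 \<or> y k l = 0"
  shows "pm x y r l = mu r c l (x r c) (y c l)"
proof -
  let ?K = "insert c (cs x)"
  have K: "finite ?K" "?K \<subseteq> I" "cs x \<subseteq> ?K" using cs_fin[OF x] cs_sub[OF x] c by auto
  have "pm x y r l = (\<Sum>k\<in>?K. mu r k l (x r k) (y k l))"
    by (rule pm_formula[OF x y K rl])
  also have "\<dots> = mu r c l (x r c) (y c l) + (\<Sum>k\<in>?K - {c}. mu r k l (x r k) (y k l))"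
    using K by (simp add: sum.insert_remove)
  also have "(\<Sum>k\<in>?K - {c}. mu r k l (x r k) (y k l)) = 0"
  proof (rule sum.neutral, rule ballI)
    fix k assume k: "k \<in> ?K - {c}"
    then have kI: "k \<in> I" using K by blast
    show "mu r k l (x r k) (y k l) = 0"
      using z[OF kI] k mu_0l[OF rl(1) kI rl(2) car_entry[OF y kI rl(2)]]
        mu_0r[OF rl(1) kI rl(2) car_entry[OF x rl(1) kI]] by auto
  qed
  finally show ?thesis by simp
qed

lemma pm_E_left:
  assumes ij: "i \<in> I" "j \<in> I" and a: "a \<in> C i j" and y: "y \<in> Acar"
  shows "pm (E i j a) y k l = (if k = i \<and> l \<in> I then mu i j l a (y j l) else 0)"
proof (cases "k \<in> I \<and> l \<in> I")
  case True
  have "pm (E i j a) y k l = mu k j l (E i j a k j) (y j l)"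
    by (rule pm_single[OF E_car[OF ij a] y ij(2)]) (use True in \<open>auto simp: E_def\<close>)
  then show ?thesis using True ij mu_0l car_entry[OF y] by (auto simp: E_def)
next
  case False then show ?thesis using pm_out ij by auto
qed

lemma pm_E_right:
  assumes jl: "j \<in> I" "l \<in> I" and b: "b \<in> C j l" and x: "x \<in> Acar"
  shows "pm x (E j l b) k m = (if k \<in> I \<and> m = l then mu k j l (x k j) b else 0)"
proof (cases "k \<in> I \<and> m \<in> I")
  case True
  have "pm x (E j l b) k m = mu k j m (x k j) (E j l b j m)"
    by (rule pm_single[OF x E_car[OF jl b] jl(1)]) (use True in \<open>auto simp: E_def\<close>)
  then show ?thesis using True jl mu_0r car_entry[OF x] by (auto simp: E_def)
next
  case False then show ?thesis using pm_out jl by auto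
qed

lemma E_mult:
  assumes "i \<in> I" "j \<in> I" "l \<in> I" "a \<in> C i j" "b \<in> C j l"
  shows "pm (E i j a) (E j l b) = E i l (mu i j l a b)"
  using assms by (auto simp: fun_eq_iff pm_E_left E_car) (auto simp: E_def mu_0r mu_0l)

lemma E_mult_ne:
  assumes "i \<in> I" "j \<in> I" "j' \<in> I" "l \<in> I" "a \<in> C i j" "b \<in> C j' l" "j \<noteq> j'"
  shows "pm (E i j a) (E j' l b) = 0"
  using assms by (auto simp: fun_eq_iff pm_E_left E_car) (auto simp: E_def mu_0r)

lemma sandwich:
  assumes "i \<in> I" "k \<in> I" "l \<in> I" "j \<in> I" "u \<in> C i k" "v \<in> C l j" "x \<in> Acar"
  shows "pm (pm (E i k u) x) (E l j v) = E i j (mu i l j (mu i k l u (x k l)) v)"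
  using assms by (auto simp: fun_eq_iff pm_E_left pm_E_right E_car pm_closed) (auto simp: E_def mu_0l mu_0r)

lemma decomp:
  assumes X0: "0 \<in> X" and Xadd: "\<And>a b. a \<in> X \<Longrightarrow> b \<in> X \<Longrightarrow> a + b \<in> X"
    and x: "x \<in> Acar" and E: "\<And>i j. i \<in> I \<Longrightarrow> j \<in> I \<Longrightarrow> E i j (x i j) \<in> X"
  shows "x \<in> X"
proof -
  have "\<forall>x. x \<in> Acar \<longrightarrow> supp2 x = F \<longrightarrow> (\<forall>i\<in>I. \<forall>j\<in>I. E i j (x i j) \<in> X) \<longrightarrow> x \<in> X"
    if "finite F" for F
    using that
  proof (induction F rule: finite_induct)
    case empty
    show ?case
    proof (intro allI impI)
      fix x assume "x \<in> Acar" "supp2 x = {}"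
      then have "x = 0" unfolding supp2_def by (auto simp: fun_eq_iff)
      then show "x \<in> X" using X0 by simp
    qed
  next
    case (insert q F)
    show ?case
    proof (intro allI impI)
      fix x assume x: "x \<in> Acar" and s: "supp2 x = insert q F" and E: "\<forall>i\<in>I. \<forall>j\<in>I. E i j (x i j) \<in> X"
      obtain i j where q: "q = (i, j)" by force
      have nz: "x i j \<noteq> 0" using s q unfolding supp2_def by auto
      then have ij: "i \<in> I" "j \<in> I" using car_out[OF x] by blast+
      let ?x' = "x - E i j (x i j)"
      have x': "?x' \<in> Acar" using car_diff[OF x E_car[OF ij car_entry[OF x ij]]] .
      have s': "supp2 ?x' = F"
        using s insert.hyps(2) q unfolding supp2_def E_def by (auto simp: fun_eq_iff split: if_splits)
      have E': "\<forall>i\<in>I. \<forall>j\<in>I. E i j (?x' i j) \<in> X"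
      proof (intro ballI)
        fix a b assume ab: "a \<in> I" "b \<in> I"
        show "E a b (?x' a b) \<in> X"
        proof (cases "a = i \<and> b = j")
          case True
          then have "?x' a b = 0" by (simp add: E_def)
          then show ?thesis by (simp add: E_0 X0)
        next
          case False
          then have "?x' a b = x a b" by (auto simp: E_def)
          then show ?thesis using E ab by simp
        qed
      qed
      have "?x' \<in> X" using insert.IH x' s' E' by blast
      moreover have "E i j (x i j) \<in> X" using E ij by blast
      ultimately have "?x' + E i j (x i j) \<in> X" by (rule Xadd)
      then show "x \<in> X" by simp
    qed
  qed
  then show ?thesis using x E car_fin[OF x] by blast
qed

lemma decomp_ideal:
  assumes "r_ideal Acar pm X" "x \<in> Acar" "\<And>i j. i \<in> I \<Longrightarrow> j \<in> I \<Longrightarrow> E i j (x i j) \<in> X"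
  shows "x \<in> X"
proof -
  interpret A: rng Acar pm by (rule A_rng)
  show ?thesis
    apply (rule decomp[of X])
    using assms A.ideal_add[OF assms(1)] unfolding r_ideal_def by auto
qed

end

lemma gid_sub: "g_ideal M G t J \<Longrightarrow> J \<subseteq> M" unfolding g_ideal_def by blast
lemma gid_0: "g_ideal M G t J \<Longrightarrow> 0 \<in> J" unfolding g_ideal_def by blast
lemma gid_diff: "g_ideal M G t J \<Longrightarrow> x \<in> J \<Longrightarrow> y \<in> J \<Longrightarrow> x - y \<in> J" unfolding g_ideal_def by blast
lemma gid_l: "g_ideal M G t J \<Longrightarrow> x \<in> J \<Longrightarrow> g \<in> G \<Longrightarrow> m \<in> M \<Longrightarrow> t x g m \<in> J" unfolding g_ideal_def by blast
lemma gid_r: "g_ideal M G t J \<Longrightarrow> x \<in> J \<Longrightarrow> g \<in> G \<Longrightarrow> m \<in> M \<Longrightarrow> t m g x \<in> J" unfolding g_ideal_def by blast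
lemma gid_neg: "g_ideal M G t J \<Longrightarrow> y \<in> J \<Longrightarrow> - y \<in> J"
  using gid_diff[of M G t J 0 y] gid_0 by fastforce
lemma gid_add: "g_ideal M G t J \<Longrightarrow> x \<in> J \<Longrightarrow> y \<in> J \<Longrightarrow> x + y \<in> J"
  using gid_diff[of M G t J x "- y"] gid_neg by fastforce
lemma gid_sum: "g_ideal M G t J \<Longrightarrow> (\<And>k. k \<in> K \<Longrightarrow> f k \<in> J) \<Longrightarrow> sum f K \<in> J"
proof (induction K rule: infinite_finite_induct)
  case (infinite A) then show ?case using gid_0 by simp
next
  case empty then show ?case using gid_0 by simp
next
  case (insert a F) then show ?case using gid_add[of M G t J "f a" "sum f F"] by simp
qed

lemma gid_Inter: "(\<And>K. K \<in> F \<Longrightarrow> g_ideal M G t K) \<Longrightarrow> g_ideal M G t M \<Longrightarrow> g_ideal M G t (M \<inter> \<Inter> F)"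
  unfolding g_ideal_def by blast

context rng
begin

lemma ideal_sub: "r_ideal R p J \<Longrightarrow> J \<subseteq> R" unfolding r_ideal_def by blast
lemma ideal_0: "r_ideal R p J \<Longrightarrow> 0 \<in> J" unfolding r_ideal_def by blast
lemma ideal_diff: "r_ideal R p J \<Longrightarrow> x \<in> J \<Longrightarrow> y \<in> J \<Longrightarrow> x - y \<in> J" unfolding r_ideal_def by blast
lemma ideal_l: "r_ideal R p J \<Longrightarrow> x \<in> J \<Longrightarrow> r \<in> R \<Longrightarrow> p x r \<in> J" unfolding r_ideal_def by blast
lemma ideal_r: "r_ideal R p J \<Longrightarrow> x \<in> J \<Longrightarrow> r \<in> R \<Longrightarrow> p r x \<in> J" unfolding r_ideal_def by blast

lemma prime_elem:
  assumes P: "r_prime_ideal R p P" and a: "a \<in> R" and b: "b \<in> R"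
    and h: "\<And>y. y \<in> R \<Longrightarrow> p (p a y) b \<in> P"
  shows "a \<in> P \<or> b \<in> P"
proof -
  have Pi: "r_ideal R p P" and PR: "P \<noteq> R"
    and Pp: "\<And>X Y. r_ideal R p X \<Longrightarrow> r_ideal R p Y \<Longrightarrow> (\<forall>x\<in>X. \<forall>y\<in>Y. p x y \<in> P) \<Longrightarrow> X \<subseteq> P \<or> Y \<subseteq> P"
    using P unfolding r_prime_ideal_def by blast+
  have PsubR: "P \<subseteq> R" using Pi ideal_sub by blast
  define R1 where "R1 = {z \<in> R. \<forall>y\<in>R. p (p z y) b \<in> P}"
  have R1: "r_ideal R p R1"
    unfolding r_ideal_def R1_def
  proof (intro conjI ballI)
    show "0 \<in> {z \<in> R. \<forall>y\<in>R. p (p z y) b \<in> P}" using zero p0l b ideal_0[OF Pi] by auto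
  next
    fix x y assume x: "x \<in> {z \<in> R. \<forall>y\<in>R. p (p z y) b \<in> P}" and y: "y \<in> {z \<in> R. \<forall>y\<in>R. p (p z y) b \<in> P}"
    show "x - y \<in> {z \<in> R. \<forall>y\<in>R. p (p z y) b \<in> P}"
      using x y by (auto simp: ldiff mult b diff intro!: ideal_diff[OF Pi])
  next
    fix x r assume x: "x \<in> {z \<in> R. \<forall>y\<in>R. p (p z y) b \<in> P}" and r: "r \<in> R"
    show "p x r \<in> {z \<in> R. \<forall>y\<in>R. p (p z y) b \<in> P}"
      using x r by (auto simp: assoc mult)
    show "p r x \<in> {z \<in> R. \<forall>y\<in>R. p (p z y) b \<in> P}"
    proof (intro CollectI conjI ballI)
      show "p r x \<in> R" using x r by (auto intro: mult)
      fix y assume y: "y \<in> R"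
      have "p (p (p r x) y) b = p r (p (p x y) b)" using x r y b by (simp add: assoc mult)
      then show "p (p (p r x) y) b \<in> P" using ideal_r[OF Pi] x r y by auto
    qed
  qed auto
  define R2 where "R2 = {w \<in> R. \<forall>z\<in>R1. p z w \<in> P}"
  have R1R: "R1 \<subseteq> R" unfolding R1_def by blast
  have R2: "r_ideal R p R2"
    unfolding r_ideal_def R2_def
  proof (intro conjI ballI)
    show "0 \<in> {w \<in> R. \<forall>z\<in>R1. p z w \<in> P}" using zero p0r R1R ideal_0[OF Pi] by auto
  next
    fix x y assume x: "x \<in> {w \<in> R. \<forall>z\<in>R1. p z w \<in> P}" and y: "y \<in> {w \<in> R. \<forall>z\<in>R1. p z w \<in> P}"
    show "x - y \<in> {w \<in> R. \<forall>z\<in>R1. p z w \<in> P}"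
    proof (intro CollectI conjI ballI)
      show "x - y \<in> R" using x y diff by auto
      fix z assume z: "z \<in> R1"
      then have "z \<in> R" using R1R by blast
      then have "p z (x - y) = p z x - p z y" using x y by (simp add: rdiff)
      then show "p z (x - y) \<in> P" using x y z ideal_diff[OF Pi] by auto
    qed
  next
    fix x r assume x: "x \<in> {w \<in> R. \<forall>z\<in>R1. p z w \<in> P}" and r: "r \<in> R"
    show "p x r \<in> {w \<in> R. \<forall>z\<in>R1. p z w \<in> P}"
    proof (intro CollectI conjI ballI)
      show "p x r \<in> R" using x r by (auto intro: mult)
      fix z assume z: "z \<in> R1"
      have "z \<in> R" using z R1R by blast
      then have "p z (p x r) = p (p z x) r" using x r by (simp add: assoc)
      then show "p z (p x r) \<in> P" using ideal_l[OF Pi] x r z by auto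
    qed
    show "p r x \<in> {w \<in> R. \<forall>z\<in>R1. p z w \<in> P}"
    proof (intro CollectI conjI ballI)
      show "p r x \<in> R" using x r by (auto intro: mult)
      fix z assume z: "z \<in> R1"
      have "z \<in> R" using z R1R by blast
      then have "p z (p r x) = p (p z r) x" using x r by (simp add: assoc)
      moreover have "p z r \<in> R1" using ideal_l[OF R1 z r] .
      ultimately show "p z (p r x) \<in> P" using x by auto
    qed
  qed auto
  have "R1 \<subseteq> P \<or> R2 \<subseteq> P" using Pp[OF R1 R2] unfolding R2_def by blast
  then show ?thesis
  proof
    assume "R1 \<subseteq> P"
    moreover have "a \<in> R1" unfolding R1_def using a h by blast
    ultimately show ?thesis by blast
  next
    assume R2P: "R2 \<subseteq> P"
    have yb: "p y b \<in> P" if y: "y \<in> R" for y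
    proof -
      have "p y b \<in> R2" unfolding R2_def R1_def using y b
        by (auto simp: mult assoc[symmetric])
      then show ?thesis using R2P by blast
    qed
    define R3 where "R3 = {w \<in> R. \<forall>y\<in>R. p y w \<in> P}"
    have R3: "r_ideal R p R3"
      unfolding r_ideal_def R3_def
    proof (intro conjI ballI)
      show "0 \<in> {w \<in> R. \<forall>y\<in>R. p y w \<in> P}" using zero p0r ideal_0[OF Pi] by auto
    next
      fix x y assume x: "x \<in> {w \<in> R. \<forall>y\<in>R. p y w \<in> P}" and y: "y \<in> {w \<in> R. \<forall>y\<in>R. p y w \<in> P}"
      show "x - y \<in> {w \<in> R. \<forall>y\<in>R. p y w \<in> P}"
        using x y by (auto simp: rdiff diff intro!: ideal_diff[OF Pi])
    next
      fix x r assume x: "x \<in> {w \<in> R. \<forall>y\<in>R. p y w \<in> P}" and r: "r \<in> R"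
      show "p x r \<in> {w \<in> R. \<forall>y\<in>R. p y w \<in> P}"
      proof (intro CollectI conjI ballI)
        show "p x r \<in> R" using x r by (auto intro: mult)
        fix z assume z: "z \<in> R"
        have "p z (p x r) = p (p z x) r" using x r z by (simp add: assoc)
        then show "p z (p x r) \<in> P" using ideal_l[OF Pi] x r z by auto
      qed
      show "p r x \<in> {w \<in> R. \<forall>y\<in>R. p y w \<in> P}"
      proof (intro CollectI conjI ballI)
        show "p r x \<in> R" using x r by (auto intro: mult)
        fix z assume z: "z \<in> R"
        have "p z (p r x) = p (p z r) x" using x r z by (simp add: assoc)
        then show "p z (p r x) \<in> P" using x z r mult by auto
      qed
    qed auto
    have "R \<subseteq> P \<or> R3 \<subseteq> P" using Pp[OF ideal_R R3] unfolding R3_def by blast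
    moreover have "b \<in> R3" unfolding R3_def using b yb by blast
    ultimately show ?thesis using PR PsubR by blast
  qed
qed

end

context gmr
begin

abbreviation "tt \<equiv> gm_tern mu"

lemma tt_eq: "tt i j x g y = mu i i j (mu i j i x g) y"
  unfolding gm_tern_def by simp

lemma tt_closed: "i \<in> I \<Longrightarrow> j \<in> I \<Longrightarrow> x \<in> C i j \<Longrightarrow> g \<in> C j i \<Longrightarrow> y \<in> C i j \<Longrightarrow> tt i j x g y \<in> C i j"
  unfolding tt_eq by (intro mu_closed) auto

lemma tt_assoc:
  assumes "i \<in> I" "j \<in> I" "x \<in> C i j" "g \<in> C j i" "y \<in> C i j" "h \<in> C j i" "z \<in> C i j"
  shows "tt i j (tt i j x g y) h z = tt i j x g (tt i j y h z)"
proof -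
  have xg: "mu i j i x g \<in> C i i" and yh: "mu i j i y h \<in> C i i" using assms by (auto intro: mu_closed)
  have "mu i j i (mu i i j (mu i j i x g) y) h = mu i i i (mu i j i x g) (mu i j i y h)"
    using assms xg by (intro mu_assoc) auto
  then show ?thesis unfolding tt_eq using assms xg yh
    by (simp add: mu_assoc mu_closed)
qed

lemma tt_diffl: "i \<in> I \<Longrightarrow> j \<in> I \<Longrightarrow> x \<in> C i j \<Longrightarrow> x' \<in> C i j \<Longrightarrow> g \<in> C j i \<Longrightarrow> y \<in> C i j \<Longrightarrow>
    tt i j (x - x') g y = tt i j x g y - tt i j x' g y"
  unfolding tt_eq by (simp add: mu_diffl mu_closed)

lemma tt_diffr: "i \<in> I \<Longrightarrow> j \<in> I \<Longrightarrow> x \<in> C i j \<Longrightarrow> y' \<in> C i j \<Longrightarrow> g \<in> C j i \<Longrightarrow> y \<in> C i j \<Longrightarrow>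
    tt i j x g (y - y') = tt i j x g y - tt i j x g y'"
  unfolding tt_eq by (simp add: mu_diffr mu_closed)

lemma tt_0l: "i \<in> I \<Longrightarrow> j \<in> I \<Longrightarrow> g \<in> C j i \<Longrightarrow> y \<in> C i j \<Longrightarrow> tt i j 0 g y = 0"
  unfolding tt_eq by (simp add: mu_0l mu_closed C0)

lemma tt_0r: "i \<in> I \<Longrightarrow> j \<in> I \<Longrightarrow> x \<in> C i j \<Longrightarrow> g \<in> C j i \<Longrightarrow> tt i j x g 0 = 0"
  unfolding tt_eq by (simp add: mu_0r mu_closed)

lemma E_tt: "i \<in> I \<Longrightarrow> j \<in> I \<Longrightarrow> z \<in> C i j \<Longrightarrow> g \<in> C j i \<Longrightarrow> w \<in> C i j \<Longrightarrow>
   E i j (tt i j z g w) = pm (pm (E i j z) (E j i g)) (E i j w)"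
  unfolding tt_eq by (simp add: E_mult mu_closed)

lemma gprime_sand:
  assumes ij: "i \<in> I" "j \<in> I" and Q: "g_prime_ideal (C i j) (C j i) (tt i j) Q" and s: "s \<in> C i j"
    and h: "\<And>u v. u \<in> C i i \<Longrightarrow> v \<in> C j j \<Longrightarrow> mu i j j (mu i i j u s) v \<in> Q"
  shows "s \<in> Q"
proof -
  let ?M = "C i j" and ?G = "C j i" and ?t = "tt i j"
  have Qi: "g_ideal ?M ?G ?t Q" and QM: "Q \<noteq> ?M"
    and Qp: "\<And>X Y. g_ideal ?M ?G ?t X \<Longrightarrow> g_ideal ?M ?G ?t Y \<Longrightarrow>
        (\<forall>x\<in>X. \<forall>g\<in>?G. \<forall>y\<in>Y. ?t x g y \<in> Q) \<Longrightarrow> X \<subseteq> Q \<or> Y \<subseteq> Q"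
    using Q unfolding g_prime_ideal_def by blast+
  have QsubM: "Q \<subseteq> ?M" using gid_sub[OF Qi] .
  have Mi: "g_ideal ?M ?G ?t ?M"
    unfolding g_ideal_def using ij C0 Cdiff tt_closed by blast
  have h2: "?t (?t m g s) g' m' \<in> Q" if "m \<in> ?M" "g \<in> ?G" "g' \<in> ?G" "m' \<in> ?M" for m g g' m'
  proof -
    have "?t (?t m g s) g' m' = mu i j j (mu i i j (mu i j i m g) s) (mu j i j g' m')"
      unfolding tt_eq using that ij s by (simp add: mu_assoc mu_closed)
    also have "\<dots> \<in> Q" using that ij by (intro h) (auto intro: mu_closed)
    finally show ?thesis .
  qed
  define W where "W = {w \<in> ?M. \<forall>g'\<in>?G. \<forall>m'\<in>?M. ?t w g' m' \<in> Q}"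
  have W: "g_ideal ?M ?G ?t W"
    unfolding g_ideal_def W_def
  proof (intro conjI ballI)
    show "0 \<in> {w \<in> ?M. \<forall>g'\<in>?G. \<forall>m'\<in>?M. ?t w g' m' \<in> Q}" using ij C0 tt_0l gid_0[OF Qi] by auto
  next
    fix x y assume x: "x \<in> {w \<in> ?M. \<forall>g'\<in>?G. \<forall>m'\<in>?M. ?t w g' m' \<in> Q}" and y: "y \<in> {w \<in> ?M. \<forall>g'\<in>?G. \<forall>m'\<in>?M. ?t w g' m' \<in> Q}"
    show "x - y \<in> {w \<in> ?M. \<forall>g'\<in>?G. \<forall>m'\<in>?M. ?t w g' m' \<in> Q}"
      using x y ij by (auto simp: tt_diffl Cdiff intro!: gid_diff[OF Qi])
  next
    fix x g m assume x: "x \<in> {w \<in> ?M. \<forall>g'\<in>?G. \<forall>m'\<in>?M. ?t w g' m' \<in> Q}" and g: "g \<in> ?G" and m: "m \<in> ?M"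
    show "?t x g m \<in> {w \<in> ?M. \<forall>g'\<in>?G. \<forall>m'\<in>?M. ?t w g' m' \<in> Q}"
      using x g m ij by (auto simp: tt_assoc tt_closed)
    show "?t m g x \<in> {w \<in> ?M. \<forall>g'\<in>?G. \<forall>m'\<in>?M. ?t w g' m' \<in> Q}"
    proof (intro CollectI conjI ballI)
      show "?t m g x \<in> ?M" using x g m ij tt_closed by auto
      fix g' m' assume g': "g' \<in> ?G" and m': "m' \<in> ?M"
      have "?t (?t m g x) g' m' = ?t m g (?t x g' m')" using x g m g' m' ij by (simp add: tt_assoc)
      moreover have "?t x g' m' \<in> Q" using x g' m' by blast
      ultimately show "?t (?t m g x) g' m' \<in> Q" using gid_r[OF Qi _ g m] by simp
    qed
  qed auto
  have "W \<subseteq> Q \<or> ?M \<subseteq> Q" using Qp[OF W Mi] unfolding W_def by blast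
  then have WQ: "W \<subseteq> Q" using QM QsubM by blast
  have mgs: "?t m g s \<in> Q" if "m \<in> ?M" "g \<in> ?G" for m g
  proof -
    have "?t m g s \<in> W" unfolding W_def using that h2 ij s tt_closed by blast
    then show ?thesis using WQ by blast
  qed
  define V where "V = {w \<in> ?M. \<forall>m\<in>?M. \<forall>g\<in>?G. ?t m g w \<in> Q}"
  have V: "g_ideal ?M ?G ?t V"
    unfolding g_ideal_def V_def
  proof (intro conjI ballI)
    show "0 \<in> {w \<in> ?M. \<forall>m\<in>?M. \<forall>g\<in>?G. ?t m g w \<in> Q}" using ij C0 tt_0r gid_0[OF Qi] by auto
  next
    fix x y assume x: "x \<in> {w \<in> ?M. \<forall>m\<in>?M. \<forall>g\<in>?G. ?t m g w \<in> Q}" and y: "y \<in> {w \<in> ?M. \<forall>m\<in>?M. \<forall>g\<in>?G. ?t m g w \<in> Q}"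
    show "x - y \<in> {w \<in> ?M. \<forall>m\<in>?M. \<forall>g\<in>?G. ?t m g w \<in> Q}"
      using x y ij by (auto simp: tt_diffr Cdiff intro!: gid_diff[OF Qi])
  next
    fix x g m assume x: "x \<in> {w \<in> ?M. \<forall>m\<in>?M. \<forall>g\<in>?G. ?t m g w \<in> Q}" and g: "g \<in> ?G" and m: "m \<in> ?M"
    show "?t x g m \<in> {w \<in> ?M. \<forall>m\<in>?M. \<forall>g\<in>?G. ?t m g w \<in> Q}"
    proof (intro CollectI conjI ballI)
      show "?t x g m \<in> ?M" using x g m ij tt_closed by auto
      fix m' g' assume m': "m' \<in> ?M" and g': "g' \<in> ?G"
      have "?t m' g' (?t x g m) = ?t (?t m' g' x) g m" using x g m g' m' ij by (simp add: tt_assoc)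
      moreover have "?t m' g' x \<in> Q" using x g' m' by blast
      ultimately show "?t m' g' (?t x g m) \<in> Q" using gid_l[OF Qi _ g m] by simp
    qed
    show "?t m g x \<in> {w \<in> ?M. \<forall>m\<in>?M. \<forall>g\<in>?G. ?t m g w \<in> Q}"
    proof (intro CollectI conjI ballI)
      show "?t m g x \<in> ?M" using x g m ij tt_closed by auto
      fix m' g' assume g': "g' \<in> ?G" and m': "m' \<in> ?M"
      have "?t m' g' (?t m g x) = ?t (?t m' g' m) g x" using x g m g' m' ij by (simp add: tt_assoc)
      moreover have "?t m' g' m \<in> ?M" using m g' m' ij tt_closed by auto
      ultimately show "?t m' g' (?t m g x) \<in> Q" using x g by auto
    qed
  qed auto
  have "?M \<subseteq> Q \<or> V \<subseteq> Q" using Qp[OF Mi V] unfolding V_def by blast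
  then have "V \<subseteq> Q" using QM QsubM by blast
  moreover have "s \<in> V" unfolding V_def using s mgs by blast
  ultimately show ?thesis by blast
qed

end

context gmr
begin

lemma proj_gideal:
  assumes X: "r_ideal Acar pm X" and ij: "i \<in> I" "j \<in> I"
  shows "g_ideal (C i j) (C j i) (tt i j) {z \<in> C i j. E i j z \<in> X}"
proof -
  interpret A: rng Acar pm by (rule A_rng)
  show ?thesis
    unfolding g_ideal_def
  proof (intro conjI ballI)
    show "0 \<in> {z \<in> C i j. E i j z \<in> X}" using C0 ij A.ideal_0[OF X] by (simp add: E_0)
  next
    fix x y assume "x \<in> {z \<in> C i j. E i j z \<in> X}" "y \<in> {z \<in> C i j. E i j z \<in> X}"
    then show "x - y \<in> {z \<in> C i j. E i j z \<in> X}"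
      using Cdiff ij A.ideal_diff[OF X] E_diff by (metis (mono_tags, lifting) mem_Collect_eq)
  next
    fix x g m assume x: "x \<in> {z \<in> C i j. E i j z \<in> X}" and g: "g \<in> C j i" and m: "m \<in> C i j"
    have Eg: "E j i g \<in> Acar" and Em: "E i j m \<in> Acar" using E_car ij g m by auto
    have "E i j (tt i j x g m) \<in> X"
      using E_tt[of i j x g m] ij x g m A.ideal_l[OF X] Eg Em A.ideal_l[OF X] by auto
    then show "tt i j x g m \<in> {z \<in> C i j. E i j z \<in> X}" using tt_closed ij x g m by auto
    have "pm (E i j m) (E j i g) \<in> Acar" using Eg Em pm_closed by auto
    then have "E i j (tt i j m g x) \<in> X"
      using E_tt[of i j m g x] ij x g m A.ideal_r[OF X] by auto
    then show "tt i j m g x \<in> {z \<in> C i j. E i j z \<in> X}" using tt_closed ij x g m by auto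
  qed auto
qed

lemma EyE:
  assumes ij: "i \<in> I" "j \<in> I" and z: "z \<in> C i j" and w: "w \<in> C i j" and y: "y \<in> Acar"
  shows "pm (pm (E i j z) y) (E i j w) = E i j (tt i j z (y j i) w)"
proof -
  have zy: "pm (E i j z) y \<in> Acar" using pm_closed E_car ij z y by auto
  show ?thesis
    using ij z w y
    by (auto simp: fun_eq_iff pm_E_right[OF ij(1) ij(2) w zy] pm_E_left[OF ij z y] tt_eq)
       (auto simp: E_def mu_0l)
qed

definition PQ :: "'i \<Rightarrow> 'i \<Rightarrow> 'a set \<Rightarrow> ('i \<Rightarrow> 'i \<Rightarrow> 'a) set" where
  "PQ i j Q = {x \<in> Acar. \<forall>k\<in>I. \<forall>l\<in>I. \<forall>u\<in>C i k. \<forall>v\<in>C l j. mu i l j (mu i k l u (x k l)) v \<in> Q}"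

lemma PQ_proj:
  assumes ij: "i \<in> I" "j \<in> I" and Q: "g_prime_ideal (C i j) (C j i) (tt i j) Q" and x: "x \<in> PQ i j Q"
  shows "x i j \<in> Q"
proof -
  have xA: "x \<in> Acar" using x unfolding PQ_def by blast
  have h: "\<forall>u\<in>C i i. \<forall>v\<in>C j j. mu i j j (mu i i j u (x i j)) v \<in> Q"
    using x ij unfolding PQ_def by blast
  show ?thesis
    by (rule gprime_sand[OF ij Q car_entry[OF xA ij]]) (use h in blast)
qed

lemma PQ_prime:
  assumes ij: "i \<in> I" "j \<in> I" and Q: "g_prime_ideal (C i j) (C j i) (tt i j) Q"
  shows "r_prime_ideal Acar pm (PQ i j Q)"
proof -
  interpret A: rng Acar pm by (rule A_rng)
  let ?M = "C i j" and ?G = "C j i" and ?t = "tt i j"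
  have Qi: "g_ideal ?M ?G ?t Q" and QM: "Q \<noteq> ?M"
    and Qp: "\<And>X Y. g_ideal ?M ?G ?t X \<Longrightarrow> g_ideal ?M ?G ?t Y \<Longrightarrow>
        (\<forall>x\<in>X. \<forall>g\<in>?G. \<forall>y\<in>Y. ?t x g y \<in> Q) \<Longrightarrow> X \<subseteq> Q \<or> Y \<subseteq> Q"
    using Q unfolding g_prime_ideal_def by blast+
  have QsubM: "Q \<subseteq> ?M" using gid_sub[OF Qi] .
  have Pid: "r_ideal Acar pm (PQ i j Q)"
    unfolding r_ideal_def
  proof (intro conjI ballI)
    show "PQ i j Q \<subseteq> Acar" unfolding PQ_def by blast
    show "0 \<in> PQ i j Q" unfolding PQ_def using car_zero gid_0[OF Qi]
      by (auto simp: mu_0r mu_0l ij)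
  next
    fix x y assume x: "x \<in> PQ i j Q" and y: "y \<in> PQ i j Q"
    show "x - y \<in> PQ i j Q"
      unfolding PQ_def
    proof (intro CollectI conjI ballI)
      show "x - y \<in> Acar" using x y car_diff unfolding PQ_def by blast
      fix k l u v assume k: "k \<in> I" and l: "l \<in> I" and u: "u \<in> C i k" and v: "v \<in> C l j"
      have xk: "x k l \<in> C k l" and yk: "y k l \<in> C k l" using x y car_entry k l unfolding PQ_def by auto
      have "mu i l j (mu i k l u ((x - y) k l)) v
          = mu i l j (mu i k l u (x k l)) v - mu i l j (mu i k l u (y k l)) v"
        using xk yk k l u v ij by (simp add: mu_diffr mu_diffl mu_closed)
      then show "mu i l j (mu i k l u ((x - y) k l)) v \<in> Q"
        using x y k l u v unfolding PQ_def by (auto intro!: gid_diff[OF Qi])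
    qed
  next
    fix x r assume x: "x \<in> PQ i j Q" and r: "r \<in> Acar"
    have xA: "x \<in> Acar" using x unfolding PQ_def by blast
    show "pm x r \<in> PQ i j Q"
      unfolding PQ_def
    proof (intro CollectI conjI ballI)
      show "pm x r \<in> Acar" using xA r pm_closed by blast
      fix k l u v assume k: "k \<in> I" and l: "l \<in> I" and u: "u \<in> C i k" and v: "v \<in> C l j"
      have K: "finite (cs x)" "cs x \<subseteq> I" using cs_fin cs_sub xA by auto
      have "mu i l j (mu i k l u (pm x r k l)) v
          = mu i l j (mu i k l u (\<Sum>m\<in>cs x. mu k m l (x k m) (r m l))) v"
        using pm_formula[OF xA r K subset_refl k l] by simp
      also have "\<dots> = (\<Sum>m\<in>cs x. mu i l j (mu i k l u (mu k m l (x k m) (r m l))) v)"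
        using K k l u v ij
        by (simp add: mu_sumr mu_suml mu_closed car_entry xA r subset_iff Csum)
      also have "\<dots> = (\<Sum>m\<in>cs x. mu i m j (mu i k m u (x k m)) (mu m l j (r m l) v))"
        apply (rule sum.cong, simp)
        using K k l u v ij
      proof -
        fix m assume m: "m \<in> cs x"
        then have mI: "m \<in> I" using K by blast
        have a: "x k m \<in> C k m" "r m l \<in> C m l" using car_entry xA r k l mI by auto
        have "mu i k l u (mu k m l (x k m) (r m l)) = mu i m l (mu i k m u (x k m)) (r m l)"
          using a k l mI u ij by (simp add: mu_assoc)
        moreover have "mu i l j (mu i m l (mu i k m u (x k m)) (r m l)) v = mu i m j (mu i k m u (x k m)) (mu m l j (r m l) v)"
          using a k l mI u v ij by (simp add: mu_assoc mu_closed)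
        ultimately show "mu i l j (mu i k l u (mu k m l (x k m) (r m l))) v = mu i m j (mu i k m u (x k m)) (mu m l j (r m l) v)"
          by simp
      qed
      also have "\<dots> \<in> Q"
      proof (rule gid_sum[OF Qi])
        fix m assume m: "m \<in> cs x"
        then have mI: "m \<in> I" using K by blast
        have "mu m l j (r m l) v \<in> C m j" using mI l v ij car_entry[OF r mI l] by (intro mu_closed) auto
        then show "mu i m j (mu i k m u (x k m)) (mu m l j (r m l) v) \<in> Q"
          using x k mI u unfolding PQ_def by blast
      qed
      finally show "mu i l j (mu i k l u (pm x r k l)) v \<in> Q" .
    qed
    show "pm r x \<in> PQ i j Q"
      unfolding PQ_def
    proof (intro CollectI conjI ballI)
      show "pm r x \<in> Acar" using xA r pm_closed by blast
      fix k l u v assume k: "k \<in> I" and l: "l \<in> I" and u: "u \<in> C i k" and v: "v \<in> C l j"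
      have K: "finite (cs r)" "cs r \<subseteq> I" using cs_fin cs_sub r by auto
      have "mu i l j (mu i k l u (pm r x k l)) v
          = mu i l j (mu i k l u (\<Sum>m\<in>cs r. mu k m l (r k m) (x m l))) v"
        using pm_formula[OF r xA K subset_refl k l] by simp
      also have "\<dots> = (\<Sum>m\<in>cs r. mu i l j (mu i k l u (mu k m l (r k m) (x m l))) v)"
        using K k l u v ij
        by (simp add: mu_sumr mu_suml mu_closed car_entry xA r subset_iff Csum)
      also have "\<dots> = (\<Sum>m\<in>cs r. mu i l j (mu i m l (mu i k m u (r k m)) (x m l)) v)"
        apply (rule sum.cong, simp)
      proof -
        fix m assume m: "m \<in> cs r"
        then have mI: "m \<in> I" using K by blast
        have a: "r k m \<in> C k m" "x m l \<in> C m l" using car_entry xA r k l mI by auto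
        have "mu i k l u (mu k m l (r k m) (x m l)) = mu i m l (mu i k m u (r k m)) (x m l)"
          using a k l mI u ij by (simp add: mu_assoc)
        then show "mu i l j (mu i k l u (mu k m l (r k m) (x m l))) v = mu i l j (mu i m l (mu i k m u (r k m)) (x m l)) v"
          by simp
      qed
      also have "\<dots> \<in> Q"
      proof (rule gid_sum[OF Qi])
        fix m assume m: "m \<in> cs r"
        then have mI: "m \<in> I" using K by blast
        have "mu i k m u (r k m) \<in> C i m" using mI k u ij car_entry[OF r k mI] by (intro mu_closed) auto
        then show "mu i l j (mu i m l (mu i k m u (r k m)) (x m l)) v \<in> Q"
          using x l mI v unfolding PQ_def by blast
      qed
      finally show "mu i l j (mu i k l u (pm r x k l)) v \<in> Q" .
    qed
  qed
  have PA: "PQ i j Q \<noteq> Acar"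
  proof
    assume eq: "PQ i j Q = Acar"
    obtain a where a: "a \<in> ?M" "a \<notin> Q" using QM QsubM by blast
    have "E i j a \<in> PQ i j Q" using eq E_car ij a by auto
    then have "E i j a i j \<in> Q" by (rule PQ_proj[OF ij Q])
    then show False using a by (simp add: E_at)
  qed
  have Pprime: "X \<subseteq> PQ i j Q \<or> Y \<subseteq> PQ i j Q"
    if X: "r_ideal Acar pm X" and Y: "r_ideal Acar pm Y" and XY: "\<forall>x\<in>X. \<forall>y\<in>Y. pm x y \<in> PQ i j Q" for X Y
  proof (rule ccontr)
    assume "\<not> (X \<subseteq> PQ i j Q \<or> Y \<subseteq> PQ i j Q)"
    then obtain x y where x: "x \<in> X" "x \<notin> PQ i j Q" and y: "y \<in> Y" "y \<notin> PQ i j Q" by blast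
    have ex: "\<exists>s. s \<in> ?M \<and> s \<notin> Q \<and> E i j s \<in> Z"
      if Z: "r_ideal Acar pm Z" and z: "z \<in> Z" "z \<notin> PQ i j Q" for Z z
    proof -
      have zA: "z \<in> Acar" using A.ideal_sub[OF Z] z by blast
      then obtain k l u v where k: "k \<in> I" "l \<in> I" "u \<in> C i k" "v \<in> C l j"
        and nq: "mu i l j (mu i k l u (z k l)) v \<notin> Q"
        using z unfolding PQ_def by blast
      let ?s = "mu i l j (mu i k l u (z k l)) v"
      have "E i j ?s = pm (pm (E i k u) z) (E l j v)"
        using sandwich[of i k l j u v z] k ij zA by simp
      also have "\<dots> \<in> Z"
        using k ij z E_car by (intro A.ideal_l[OF Z] A.ideal_r[OF Z]) auto
      finally have "E i j ?s \<in> Z" .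
      moreover have "?s \<in> ?M" using k ij car_entry[OF zA k(1) k(2)] by (intro mu_closed) auto
      ultimately show ?thesis using nq by blast
    qed
    obtain s where s: "s \<in> ?M" "s \<notin> Q" "E i j s \<in> X" using ex[OF X x] by blast
    obtain s' where s': "s' \<in> ?M" "s' \<notin> Q" "E i j s' \<in> Y" using ex[OF Y y] by blast
    let ?XI = "{z \<in> ?M. E i j z \<in> X}" and ?YI = "{z \<in> ?M. E i j z \<in> Y}"
    have "?XI \<subseteq> Q \<or> ?YI \<subseteq> Q"
    proof (rule Qp[OF proj_gideal[OF X ij] proj_gideal[OF Y ij]], intro ballI)
      fix z g w assume z: "z \<in> ?XI" and g: "g \<in> ?G" and w: "w \<in> ?YI"
      have "E i j (?t z g w) = pm (pm (E i j z) (E j i g)) (E i j w)"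
        using E_tt ij z g w by auto
      moreover have "pm (E i j z) (E j i g) \<in> X" using z g ij E_car A.ideal_l[OF X] by auto
      ultimately have "E i j (?t z g w) \<in> PQ i j Q" using XY w by auto
      then have "E i j (?t z g w) i j \<in> Q" by (rule PQ_proj[OF ij Q])
      then show "?t z g w \<in> Q" by (simp add: E_at)
    qed
    then show False using s s' by blast
  qed
  show ?thesis unfolding r_prime_ideal_def using Pid PA Pprime by blast
qed

lemma prime_down:
  assumes ij: "i \<in> I" "j \<in> I" and P: "r_prime_ideal Acar pm P"
  shows "{z \<in> C i j. E i j z \<in> P} = C i j \<or> g_prime_ideal (C i j) (C j i) (tt i j) {z \<in> C i j. E i j z \<in> P}"
proof -
  interpret A: rng Acar pm by (rule A_rng)
  have Pi: "r_ideal Acar pm P" using P unfolding r_prime_ideal_def by blast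
  let ?PI = "{z \<in> C i j. E i j z \<in> P}"
  have "g_prime_ideal (C i j) (C j i) (tt i j) ?PI" if ne: "?PI \<noteq> C i j"
    unfolding g_prime_ideal_def
  proof (intro conjI allI impI)
    show "g_ideal (C i j) (C j i) (tt i j) ?PI" by (rule proj_gideal[OF Pi ij])
    show "?PI \<noteq> C i j" by (rule ne)
    fix X Y assume h: "g_ideal (C i j) (C j i) (tt i j) X \<and> g_ideal (C i j) (C j i) (tt i j) Y \<and>
         (\<forall>x\<in>X. \<forall>g\<in>C j i. \<forall>y\<in>Y. tt i j x g y \<in> ?PI)"
    show "X \<subseteq> ?PI \<or> Y \<subseteq> ?PI"
    proof (rule ccontr)
      assume "\<not> (X \<subseteq> ?PI \<or> Y \<subseteq> ?PI)"
      then obtain z w where z: "z \<in> X" "z \<notin> ?PI" and w: "w \<in> Y" "w \<notin> ?PI" by blast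
      have zM: "z \<in> C i j" and wM: "w \<in> C i j" using z w h gid_sub by blast+
      have "E i j z \<in> P \<or> E i j w \<in> P"
      proof (rule A.prime_elem[OF P E_car[OF ij zM] E_car[OF ij wM]])
        fix y assume y: "y \<in> Acar"
        have "pm (pm (E i j z) y) (E i j w) = E i j (tt i j z (y j i) w)"
          by (rule EyE[OF ij zM wM y])
        moreover have "tt i j z (y j i) w \<in> ?PI" using h z w car_entry[OF y ij(2) ij(1)] by blast
        ultimately show "pm (pm (E i j z) y) (E i j w) \<in> P" by simp
      qed
      then show False using z w zM wM by blast
    qed
  qed
  then show ?thesis by blast
qed

lemma baer_eq: "r_baer Acar pm = gm_sum I C (comp_rad Baer C mu)"
proof
  show "r_baer Acar pm \<subseteq> gm_sum I C (comp_rad Baer C mu)"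
  proof
    fix x assume x: "x \<in> r_baer Acar pm"
    have xA: "x \<in> Acar" using x unfolding r_baer_def by blast
    have "x i j \<in> g_baer (C i j) (C j i) (tt i j)" if ij: "i \<in> I" "j \<in> I" for i j
      unfolding g_baer_def
    proof (intro IntI InterI)
      show "x i j \<in> C i j" using car_entry xA ij by blast
      fix Q assume "Q \<in> {P. g_prime_ideal (C i j) (C j i) (tt i j) P}"
      then have Q: "g_prime_ideal (C i j) (C j i) (tt i j) Q" by blast
      have "x \<in> PQ i j Q" using x PQ_prime[OF ij Q] unfolding r_baer_def by blast
      then show "x i j \<in> Q" by (rule PQ_proj[OF ij Q])
    qed
    then show "x \<in> gm_sum I C (comp_rad Baer C mu)"
      unfolding gm_sum_def comp_rad_def using xA by simp
  qed
next
  show "gm_sum I C (comp_rad Baer C mu) \<subseteq> r_baer Acar pm"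
  proof
    fix x assume x: "x \<in> gm_sum I C (comp_rad Baer C mu)"
    have xA: "x \<in> Acar" and xc: "\<And>i j. i \<in> I \<Longrightarrow> j \<in> I \<Longrightarrow> x i j \<in> g_baer (C i j) (C j i) (tt i j)"
      using x unfolding gm_sum_def comp_rad_def by auto
    show "x \<in> r_baer Acar pm"
      unfolding r_baer_def
    proof (intro IntI InterI)
      show "x \<in> Acar" by (rule xA)
      fix P assume "P \<in> {P. r_prime_ideal Acar pm P}"
      then have P: "r_prime_ideal Acar pm P" by blast
      have Pi: "r_ideal Acar pm P" using P unfolding r_prime_ideal_def by blast
      show "x \<in> P"
      proof (rule decomp_ideal[OF Pi xA])
        fix i j assume ij: "i \<in> I" "j \<in> I"
        have "x i j \<in> {z \<in> C i j. E i j z \<in> P}"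
          using prime_down[OF ij P] xc[OF ij] unfolding g_baer_def by blast
        then show "E i j (x i j) \<in> P" by blast
      qed
    qed
  qed
qed

end

definition qrr :: "'r::ab_group_add set \<Rightarrow> ('r \<Rightarrow> 'r \<Rightarrow> 'r) \<Rightarrow> 'r set \<Rightarrow> bool" where
  "qrr R p L \<longleftrightarrow> L \<subseteq> R \<and> 0 \<in> L \<and> (\<forall>x\<in>L. \<forall>y\<in>L. x - y \<in> L) \<and> (\<forall>x\<in>L. \<forall>r\<in>R. p x r \<in> L)
     \<and> (\<forall>x\<in>L. r_rqr R p x)"

context rng
begin

lemma ideal_sum: "r_ideal R p J \<Longrightarrow> (\<And>k. k \<in> K \<Longrightarrow> f k \<in> J) \<Longrightarrow> sum f K \<in> J"
proof (induction K rule: infinite_finite_induct)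
  case (infinite A) then show ?case using ideal_0 by simp
next
  case empty then show ?case using ideal_0 by simp
next
  case (insert a F) then show ?case using ideal_add by simp
qed

lemma circ_assoc:
  assumes x: "x \<in> R" and y: "y \<in> R" and z: "z \<in> R"
  shows "(x + y - p x y) + z - p (x + y - p x y) z = x + (y + z - p y z) - p x (y + z - p y z)"
proof -
  have xy: "p x y \<in> R" and yz: "p y z \<in> R" using x y z mult by auto
  have e1: "p (x + y - p x y) z = p x z + p y z - p x (p y z)"
    using x y z xy by (simp add: ldiff ldist add assoc)
  have e2: "p x (y + z - p y z) = p x y + p x z - p x (p y z)"
    using x y z yz by (simp add: rdiff rdist add)
  show ?thesis unfolding e1 e2 by (simp add: algebra_simps)
qed

lemma rqr_swap:
  assumes a: "a \<in> R" and b: "b \<in> R" and q: "r_rqr R p (p a b)"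
  shows "r_rqr R p (p b a)"
proof -
  obtain z where z: "z \<in> R" "p a b + z - p (p a b) z = 0" using q unfolding r_rqr_def by blast
  have ab: "p a b \<in> R" and ba: "p b a \<in> R" using a b mult by auto
  let ?w = "- p b a + p (p b z) a"
  have bz: "p b z \<in> R" using b z mult by auto
  have w: "?w \<in> R" using ba bz a by (intro add neg mult) (use b z in auto)
  have "p (p b a) ?w = - p (p b a) (p b a) + p (p b a) (p (p b z) a)"
    using rdist[OF ba neg[OF ba] mult[OF bz a]] rneg[OF ba ba] by simp
  also have "p (p b a) (p b a) = p b (p (p a b) a)" using a b by (simp add: assoc mult)
  also have "p (p b a) (p (p b z) a) = p b (p (p (p a b) z) a)" using a b z by (simp add: assoc mult)
  finally have e1: "p (p b a) ?w = - p b (p (p a b) a) + p b (p (p (p a b) z) a)" .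
  have m1: "p a b + z \<in> R" "p (p a b) z \<in> R" "p (p a b) a \<in> R" "p z a \<in> R" "p (p (p a b) z) a \<in> R"
    using ab z(1) a by (auto intro: add mult)
  have q1: "p (p a b + z - p (p a b) z) a = p (p a b) a + p z a - p (p (p a b) z) a"
    using ldiff[OF m1(1) m1(2) a] ldist[OF ab z(1) a] by simp
  have q2: "p b (p (p a b) a + p z a - p (p (p a b) z) a) = p b (p (p a b) a) + p b (p z a) - p b (p (p (p a b) z) a)"
    using rdiff[OF b add[OF m1(3) m1(4)] m1(5)] rdist[OF b m1(3) m1(4)] by simp
  have q3: "p b (p z a) = p (p b z) a" using assoc[OF b z(1) a] by simp
  have "p b (p (p a b + z - p (p a b) z) a) = 0" using z(2) p0l p0r a b by simp
  then have e2: "p b (p (p a b) a) + p (p b z) a - p b (p (p (p a b) z) a) = 0"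
    using q1 q2 q3 by simp
  have "p b a + ?w - p (p b a) ?w = 0"
    unfolding e1 using e2 by (simp add: algebra_simps)
  then show ?thesis unfolding r_rqr_def using w by blast
qed

lemma qrr_sum:
  assumes L1: "qrr R p L1" and L2: "qrr R p L2"
  shows "qrr R p {a + b |a b. a \<in> L1 \<and> b \<in> L2}"
proof -
  have s1: "L1 \<subseteq> R" "0 \<in> L1" "\<And>x y. x \<in> L1 \<Longrightarrow> y \<in> L1 \<Longrightarrow> x - y \<in> L1" "\<And>x r. x \<in> L1 \<Longrightarrow> r \<in> R \<Longrightarrow> p x r \<in> L1"
      "\<And>x. x \<in> L1 \<Longrightarrow> r_rqr R p x"
    using L1 unfolding qrr_def by blast+
  have s2: "L2 \<subseteq> R" "0 \<in> L2" "\<And>x y. x \<in> L2 \<Longrightarrow> y \<in> L2 \<Longrightarrow> x - y \<in> L2" "\<And>x r. x \<in> L2 \<Longrightarrow> r \<in> R \<Longrightarrow> p x r \<in> L2"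
      "\<And>x. x \<in> L2 \<Longrightarrow> r_rqr R p x"
    using L2 unfolding qrr_def by blast+
  define S where "S = {a + b |a b. a \<in> L1 \<and> b \<in> L2}"
  have Si: "x \<in> S \<longleftrightarrow> (\<exists>a b. x = a + b \<and> a \<in> L1 \<and> b \<in> L2)" for x unfolding S_def by blast
  have "qrr R p S"
    unfolding qrr_def
  proof (intro conjI ballI subsetI)
    fix x assume "x \<in> S"
    then obtain a b where "x = a + b" "a \<in> L1" "b \<in> L2" using Si by blast
    then show "x \<in> R" using s1(1) s2(1) add by blast
  next
    have "0 = 0 + (0::'r)" by simp
    then show "0 \<in> S" using Si s1(2) s2(2) by blast
  next
    fix x y assume "x \<in> S" "y \<in> S"
    then obtain a b a' b' where e: "x = a + b" "y = a' + b'" "a \<in> L1" "b \<in> L2" "a' \<in> L1" "b' \<in> L2"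
      using Si by meson
    have "x - y = (a - a') + (b - b')" using e by (simp add: algebra_simps)
    moreover have "a - a' \<in> L1" "b - b' \<in> L2" using e s1(3) s2(3) by auto
    ultimately show "x - y \<in> S" using Si by blast
  next
    fix x r assume "x \<in> S" "r \<in> R"
    then obtain a b where ab: "x = a + b" "a \<in> L1" "b \<in> L2" "r \<in> R" using Si by blast
    have "a \<in> R" "b \<in> R" using ab s1(1) s2(1) by auto
    then have "p x r = p a r + p b r" using ab ldist by blast
    moreover have "p a r \<in> L1" "p b r \<in> L2" using ab s1(4) s2(4) by auto
    ultimately show "p x r \<in> S" using Si by blast
  next
    fix x assume "x \<in> S"
    then obtain a b where ab: "x = a + b" "a \<in> L1" "b \<in> L2" using Si by blast
    have aR: "a \<in> R" and bR: "b \<in> R" using ab s1(1) s2(1) by auto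
    obtain z where z: "z \<in> R" "a + z - p a z = 0" using s1(5)[OF ab(2)] unfolding r_rqr_def by blast
    have "p (a + b) z = p a z + p b z" using ldist[OF aR bR z(1)] .
    then have e: "(a + b) + z - p (a + b) z = b - p b z"
      using z(2) by (simp add: algebra_simps)
    have "b - p b z \<in> L2" using s2(3) s2(4) ab z by blast
    then have "r_rqr R p (b - p b z)" using s2(5) by blast
    then have "r_rqr R p ((a + b) + z - p (a + b) z)" unfolding e .
    then obtain w where w: "w \<in> R" "((a + b) + z - p (a + b) z) + w - p ((a + b) + z - p (a + b) z) w = 0"
      unfolding r_rqr_def by blast
    have ab': "a + b \<in> R" using aR bR add by blast
    have "(a + b) + (z + w - p z w) - p (a + b) (z + w - p z w) = 0"
      using w(2) circ_assoc[OF ab' z(1) w(1)] by simp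
    moreover have "z + w - p z w \<in> R" using z w by (intro diff add mult) auto
    ultimately show "r_rqr R p x" unfolding r_rqr_def ab by blast
  qed
  then show ?thesis unfolding S_def .
qed

definition "Ujac = {x. \<exists>L. qrr R p L \<and> x \<in> L}"

lemma qrr_0: "qrr R p {0}"
  unfolding qrr_def r_rqr_def using zero p0l by auto

lemma qrr_left:
  assumes L: "qrr R p L" and r: "r \<in> R"
  shows "qrr R p {p r l |l. l \<in> L}"
proof -
  have s: "L \<subseteq> R" "0 \<in> L" "\<And>x y. x \<in> L \<Longrightarrow> y \<in> L \<Longrightarrow> x - y \<in> L" "\<And>x s. x \<in> L \<Longrightarrow> s \<in> R \<Longrightarrow> p x s \<in> L"
      "\<And>x. x \<in> L \<Longrightarrow> r_rqr R p x"
    using L unfolding qrr_def by blast+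
  show ?thesis
    unfolding qrr_def
  proof (intro conjI ballI)
    show "{p r l |l. l \<in> L} \<subseteq> R" using s r mult by blast
    show "0 \<in> {p r l |l. l \<in> L}" using s r p0r by force
  next
    fix x y assume "x \<in> {p r l |l. l \<in> L}" "y \<in> {p r l |l. l \<in> L}"
    then obtain a b where "x = p r a" "y = p r b" "a \<in> L" "b \<in> L" by blast
    moreover have "p r (a - b) = p r a - p r b" using rdiff[OF r] s(1) \<open>a \<in> L\<close> \<open>b \<in> L\<close> by blast
    moreover have "a - b \<in> L" using s(3) \<open>a \<in> L\<close> \<open>b \<in> L\<close> by blast
    ultimately show "x - y \<in> {p r l |l. l \<in> L}" by (metis (mono_tags, lifting) mem_Collect_eq)
  next
    fix x t assume "x \<in> {p r l |l. l \<in> L}" "t \<in> R"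
    then obtain a where "x = p r a" "a \<in> L" "t \<in> R" by blast
    then show "p x t \<in> {p r l |l. l \<in> L}" using s r assoc by (auto intro!: exI[of _ "p a t"])
  next
    fix x assume "x \<in> {p r l |l. l \<in> L}"
    then obtain a where a: "x = p r a" "a \<in> L" by blast
    have "r_rqr R p (p a r)" using s a r by blast
    then show "r_rqr R p x" using rqr_swap[of a r] a s r by blast
  qed
qed

lemma Ujac_ideal: "r_ideal R p Ujac"
  unfolding r_ideal_def
proof (intro conjI ballI)
  show "Ujac \<subseteq> R" unfolding Ujac_def qrr_def by blast
  show "0 \<in> Ujac" unfolding Ujac_def using qrr_0 by blast
next
  fix x y assume "x \<in> Ujac" "y \<in> Ujac"
  then obtain L1 L2 where L: "qrr R p L1" "x \<in> L1" "qrr R p L2" "y \<in> L2" unfolding Ujac_def by blast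
  have "- y \<in> L2" using L unfolding qrr_def by (metis diff_0)
  then have "x - y \<in> {a + b |a b. a \<in> L1 \<and> b \<in> L2}" using L by force
  then show "x - y \<in> Ujac" unfolding Ujac_def using qrr_sum[OF L(1) L(3)] by blast
next
  fix x r assume "x \<in> Ujac" "r \<in> R"
  then obtain L where L: "qrr R p L" "x \<in> L" "r \<in> R" unfolding Ujac_def by blast
  show "p x r \<in> Ujac" unfolding Ujac_def using L unfolding qrr_def by blast
  have "p r x \<in> {p r l |l. l \<in> L}" using L by blast
  then show "p r x \<in> Ujac" unfolding Ujac_def using qrr_left[OF L(1) L(3)] by blast
qed

lemma Ujac_rqr: "x \<in> Ujac \<Longrightarrow> r_rqr R p x"
  unfolding Ujac_def qrr_def by blast

lemma jac_eq: "r_jacobson R p = Ujac"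
proof
  show "r_jacobson R p \<subseteq> Ujac"
  proof -
    have "Ujac \<in> {K. r_ideal R p K \<and> (\<forall>J. r_ideal R p J \<and> (\<forall>x\<in>J. r_rqr R p x) \<longrightarrow> J \<subseteq> K)}"
    proof (intro CollectI conjI allI impI)
      show "r_ideal R p Ujac" by (rule Ujac_ideal)
      fix J assume J: "r_ideal R p J \<and> (\<forall>x\<in>J. r_rqr R p x)"
      then have "qrr R p J" unfolding qrr_def r_ideal_def by blast
      then show "J \<subseteq> Ujac" unfolding Ujac_def by blast
    qed
    then show ?thesis unfolding r_jacobson_def by blast
  qed
  show "Ujac \<subseteq> r_jacobson R p"
    unfolding r_jacobson_def
  proof (intro Int_greatest Inter_greatest)
    show "Ujac \<subseteq> R" using Ujac_ideal unfolding r_ideal_def by blast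
    fix K assume "K \<in> {K. r_ideal R p K \<and> (\<forall>J. r_ideal R p J \<and> (\<forall>x\<in>J. r_rqr R p x) \<longrightarrow> J \<subseteq> K)}"
    then show "Ujac \<subseteq> K" using Ujac_ideal Ujac_rqr by blast
  qed
qed

lemma jac_ideal: "r_ideal R p (r_jacobson R p)"
  using jac_eq Ujac_ideal by simp

lemma jac_rqr: "x \<in> r_jacobson R p \<Longrightarrow> r_rqr R p x"
  using jac_eq Ujac_rqr by simp

lemma qrr_sub_jac: "qrr R p L \<Longrightarrow> L \<subseteq> r_jacobson R p"
  using jac_eq unfolding Ujac_def by blast

lemma rqr_sq:
  assumes x: "x \<in> R" and q: "r_rqr R p (p x x)"
  shows "r_rqr R p x"
proof -
  obtain z where z: "z \<in> R" "p x x + z - p (p x x) z = 0" using q unfolding r_rqr_def by blast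
  let ?y = "- x + z + p x z"
  have y: "?y \<in> R" using x z by (intro add neg mult) auto
  have "p x ?y = p x (- x + z) + p x (p x z)"
    using rdist[OF x add[OF neg[OF x] z(1)] mult[OF x z(1)]] .
  also have "p x (- x + z) = - p x x + p x z"
    using rdist[OF x neg[OF x] z(1)] rneg[OF x x] by simp
  finally have "p x ?y = - p x x + p x z + p x (p x z)" .
  moreover have "p (p x x) z = p x (p x z)" using assoc[OF x x z(1)] .
  ultimately have "x + ?y - p x ?y = p x x + z - p (p x x) z"
    by (simp add: algebra_simps)
  then have "x + ?y - p x ?y = 0" using z(2) by simp
  then show ?thesis unfolding r_rqr_def using y by blast
qed

lemma jac_b:
  assumes x: "x \<in> R" and h: "\<And>r. r \<in> R \<Longrightarrow> p x r \<in> r_jacobson R p"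
  shows "x \<in> r_jacobson R p"
proof -
  let ?K = "{x \<in> R. \<forall>r\<in>R. p x r \<in> r_jacobson R p}"
  have "qrr R p ?K"
    unfolding qrr_def
  proof (intro conjI ballI)
    show "?K \<subseteq> R" by blast
    show "0 \<in> ?K" using zero p0l ideal_0[OF jac_ideal] by auto
  next
    fix a b assume "a \<in> ?K" "b \<in> ?K"
    then show "a - b \<in> ?K" using diff ldiff ideal_diff[OF jac_ideal] by auto
  next
    fix a r assume "a \<in> ?K" "r \<in> R"
    then show "p a r \<in> ?K" using mult assoc by auto
  next
    fix a assume "a \<in> ?K"
    then show "r_rqr R p a" using rqr_sq jac_rqr by blast
  qed
  then have "?K \<subseteq> r_jacobson R p" by (rule qrr_sub_jac)
  then show ?thesis using x h by blast
qed

end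

lemma gjac_ge: "g_ideal M G t N \<Longrightarrow> (\<forall>x\<in>N. g_rqr M G t x) \<Longrightarrow> N \<subseteq> g_jacobson M G t"
  unfolding g_jacobson_def using gid_sub by blast

lemma gjac_le: "g_ideal M G t Q \<Longrightarrow> (\<And>N. g_ideal M G t N \<Longrightarrow> (\<forall>x\<in>N. g_rqr M G t x) \<Longrightarrow> N \<subseteq> Q)
   \<Longrightarrow> g_jacobson M G t \<subseteq> Q"
  unfolding g_jacobson_def by blast

context gmr
begin

definition Pr :: "'i \<Rightarrow> 'i \<Rightarrow> ('i \<Rightarrow> 'i \<Rightarrow> 'a) set \<Rightarrow> 'a set" where
  "Pr i j X = {x i j |x. x \<in> X}"

lemma ent_xEg:
  assumes x: "x \<in> Acar" and ij: "i \<in> I" "j \<in> I" and g: "g \<in> C j i"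
  shows "pm x (E j i g) i i = mu i j i (x i j) g"
  using pm_E_right[OF ij(2) ij(1) g x] ij by simp

lemma ent_tl:
  assumes x: "x \<in> Acar" and ij: "i \<in> I" "j \<in> I" and g: "g \<in> C j i" and m: "m \<in> C i j"
  shows "pm (pm x (E j i g)) (E i j m) i j = tt i j (x i j) g m"
proof -
  have xg: "pm x (E j i g) \<in> Acar" using pm_closed x E_car ij g by auto
  show ?thesis using pm_E_right[OF ij m xg] ent_xEg[OF x ij g] ij by (simp add: tt_eq)
qed

lemma ent_tr:
  assumes x: "x \<in> Acar" and ij: "i \<in> I" "j \<in> I" and g: "g \<in> C j i" and m: "m \<in> C i j"
  shows "pm (pm (E i j m) (E j i g)) x i j = tt i j m g (x i j)"
proof -
  have c: "mu i j i m g \<in> C i i" using ij m g by (intro mu_closed) auto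
  have "pm (E i j m) (E j i g) = E i i (mu i j i m g)" using E_mult ij m g by auto
  then show ?thesis using pm_E_left[OF ij(1) ij(1) c x] ij by (simp add: tt_eq)
qed

lemma Pr_gideal:
  assumes X: "r_ideal Acar pm X" and ij: "i \<in> I" "j \<in> I"
  shows "g_ideal (C i j) (C j i) (tt i j) (Pr i j X)"
proof -
  interpret A: rng Acar pm by (rule A_rng)
  have XA: "X \<subseteq> Acar" using A.ideal_sub[OF X] .
  show ?thesis
    unfolding g_ideal_def
  proof (intro conjI ballI subsetI)
    fix z assume "z \<in> Pr i j X"
    then obtain x where "z = x i j" "x \<in> X" unfolding Pr_def by blast
    then show "z \<in> C i j" using car_entry XA ij by blast
  next
    have "(0::'i \<Rightarrow> 'i \<Rightarrow> 'a) i j = 0" by simp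
    then show "0 \<in> Pr i j X" unfolding Pr_def using A.ideal_0[OF X] by (metis (mono_tags, lifting) mem_Collect_eq)
  next
    fix a b assume "a \<in> Pr i j X" "b \<in> Pr i j X"
    then obtain x y where e: "a = x i j" "x \<in> X" "b = y i j" "y \<in> X" unfolding Pr_def by blast
    have "a - b = (x - y) i j" using e by simp
    moreover have "x - y \<in> X" using A.ideal_diff[OF X] e by blast
    ultimately show "a - b \<in> Pr i j X" unfolding Pr_def by blast
  next
    fix a g m assume a: "a \<in> Pr i j X" and g: "g \<in> C j i" and m: "m \<in> C i j"
    then obtain x where e: "a = x i j" "x \<in> X" unfolding Pr_def by blast
    have xA: "x \<in> Acar" using e XA by blast
    have Eg: "E j i g \<in> Acar" and Em: "E i j m \<in> Acar" using E_car ij g m by auto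
    have "pm (pm x (E j i g)) (E i j m) \<in> X" using A.ideal_l[OF X] e Eg Em by auto
    moreover have "pm (pm x (E j i g)) (E i j m) i j = tt i j a g m" using ent_tl[OF xA ij g m] e by simp
    ultimately show "tt i j a g m \<in> Pr i j X" unfolding Pr_def by (metis (mono_tags, lifting) mem_Collect_eq)
    have "pm (E i j m) (E j i g) \<in> Acar" using pm_closed Eg Em by blast
    then have "pm (pm (E i j m) (E j i g)) x \<in> X" using A.ideal_r[OF X] e by auto
    moreover have "pm (pm (E i j m) (E j i g)) x i j = tt i j m g a" using ent_tr[OF xA ij g m] e by simp
    ultimately show "tt i j m g a \<in> Pr i j X" unfolding Pr_def by (metis (mono_tags, lifting) mem_Collect_eq)
  qed
qed

lemma Pr_rqr:
  assumes X: "r_ideal Acar pm X" and Xq: "\<And>x. x \<in> X \<Longrightarrow> r_rqr Acar pm x" and ij: "i \<in> I" "j \<in> I"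
    and a: "a \<in> Pr i j X"
  shows "g_rqr (C i j) (C j i) (tt i j) a"
  unfolding g_rqr_def
proof
  interpret A: rng Acar pm by (rule A_rng)
  fix g assume g: "g \<in> C j i"
  obtain x where e: "a = x i j" "x \<in> X" using a unfolding Pr_def by blast
  have xA: "x \<in> Acar" using e A.ideal_sub[OF X] by blast
  have aC: "a \<in> C i j" using e car_entry[OF xA ij] by simp
  let ?u = "pm x (E j i g)"
  have uA: "?u \<in> Acar" using pm_closed xA E_car ij g by auto
  have "?u \<in> X" using A.ideal_l[OF X e(2)] E_car ij g by auto
  then obtain z where z: "z \<in> Acar" "?u + z - pm ?u z = 0" using Xq unfolding r_rqr_def by blast
  have ue: "?u i k = (if k = i then mu i j i a g else 0)" if "k \<in> I" for k
    using pm_E_right[OF ij(2) ij(1) g xA] ij that e by auto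
  have "pm ?u z i i = mu i i i (?u i i) (z i i)"
    by (rule pm_single[OF uA z(1) ij(1) ij(1) ij(1)]) (use ue in auto)
  then have "pm ?u z i i = mu i i i (mu i j i a g) (z i i)" using ue ij by simp
  moreover have "?u i i + z i i - pm ?u z i i = 0" using fun_cong[OF fun_cong[OF z(2), of i], of i] by simp
  ultimately have cw: "mu i j i a g + z i i - mu i i i (mu i j i a g) (z i i) = 0" using ue ij by simp
  let ?c = "mu i j i a g" and ?w = "z i i"
  have c: "?c \<in> C i i" using aC g ij by (intro mu_closed) auto
  have w: "?w \<in> C i i" using car_entry[OF z(1) ij(1) ij(1)] .
  let ?y = "- a + mu i i j ?w a"
  have wa: "mu i i j ?w a \<in> C i j" using w aC ij by (intro mu_closed) auto
  have y: "?y \<in> C i j" using Cadd[OF ij Cneg[OF ij aC] wa] .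
  have cw': "mu i i i ?c ?w \<in> C i i" using mu_closed[OF ij(1) ij(1) ij(1) c w] .
  have "mu i i j (?c + ?w - mu i i i ?c ?w) a = mu i i j ?c a + mu i i j ?w a - mu i i j (mu i i i ?c ?w) a"
    using c w cw' aC ij by (simp add: mu_diffl mu_addl Cadd)
  moreover have "mu i i j (?c + ?w - mu i i i ?c ?w) a = 0" using cw mu_0l ij aC by simp
  moreover have "tt i j a g ?y = - mu i i j ?c a + mu i i j ?c (mu i i j ?w a)"
    unfolding tt_eq using mu_addr[OF ij(1) ij(1) ij(2) c Cneg[OF ij aC] wa] mu_negr[OF ij(1) ij(1) ij(2) c aC] by simp
  moreover have "mu i i j ?c (mu i i j ?w a) = mu i i j (mu i i i ?c ?w) a"
    using mu_assoc[OF ij(1) ij(1) ij(1) ij(2) c w aC] by simp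
  ultimately have "a + ?y - tt i j a g ?y = 0" by (simp add: algebra_simps)
  then show "\<exists>y\<in>C i j. a + y - tt i j a g y = 0" using y by blast
qed

lemma nC_qrr:
  assumes ij: "i \<in> I" "j \<in> I" and n: "n \<in> C i j" and q: "g_rqr (C i j) (C j i) (tt i j) n"
  shows "qrr (C i i) (mu i i i) {mu i j i n g |g. g \<in> C j i}"
  unfolding qrr_def
proof (intro conjI ballI subsetI)
  fix x assume "x \<in> {mu i j i n g |g. g \<in> C j i}"
  then show "x \<in> C i i" using ij n mu_closed by blast
next
  have "0 = mu i j i n 0" using mu_0r ij n by simp
  then show "0 \<in> {mu i j i n g |g. g \<in> C j i}" using C0 ij by blast
next
  fix x y assume "x \<in> {mu i j i n g |g. g \<in> C j i}" "y \<in> {mu i j i n g |g. g \<in> C j i}"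
  then obtain g h where e: "x = mu i j i n g" "y = mu i j i n h" "g \<in> C j i" "h \<in> C j i" by blast
  then have "x - y = mu i j i n (g - h)" using mu_diffr ij n by simp
  moreover have "g - h \<in> C j i" using Cdiff e ij by blast
  ultimately show "x - y \<in> {mu i j i n g |g. g \<in> C j i}" by blast
next
  fix x r assume "x \<in> {mu i j i n g |g. g \<in> C j i}" and r: "r \<in> C i i"
  then obtain g where e: "x = mu i j i n g" "g \<in> C j i" by blast
  then have "mu i i i x r = mu i j i n (mu j i i g r)" using mu_assoc ij n r by simp
  moreover have "mu j i i g r \<in> C j i" using e r ij by (intro mu_closed) auto
  ultimately show "mu i i i x r \<in> {mu i j i n g |g. g \<in> C j i}" by blast
next
  fix x assume "x \<in> {mu i j i n g |g. g \<in> C j i}"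
  then obtain g where e: "x = mu i j i n g" "g \<in> C j i" by blast
  obtain y where y: "y \<in> C i j" "n + y - tt i j n g y = 0" using q e unfolding g_rqr_def by blast
  have ng: "mu i j i n g \<in> C i i" and yg: "mu i j i y g \<in> C i i" using ij n y e by (auto intro: mu_closed)
  have t: "tt i j n g y \<in> C i j" using tt_closed ij n e y by blast
  have "mu i j i (n + y - tt i j n g y) g = mu i j i n g + mu i j i y g - mu i j i (tt i j n g y) g"
    using ij n y(1) e t by (simp add: mu_diffl mu_addl Cadd)
  moreover have "mu i j i (tt i j n g y) g = mu i i i (mu i j i n g) (mu i j i y g)"
    unfolding tt_eq using ij n y(1) e ng by (intro mu_assoc) auto
  moreover have "mu i j i (n + y - tt i j n g y) g = 0" using y(2) mu_0l ij e by simp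
  ultimately have "x + mu i j i y g - mu i i i x (mu i j i y g) = 0" using e by simp
  then show "r_rqr (C i i) (mu i i i) x" unfolding r_rqr_def using yg by blast
qed

end

context gmr
begin

definition Lrow :: "'i \<Rightarrow> ('i \<Rightarrow> 'i \<Rightarrow> 'a) set" where
  "Lrow i = {x \<in> Acar. (\<forall>k l. k \<noteq> i \<longrightarrow> x k l = 0) \<and> x i i \<in> r_jacobson (C i i) (mu i i i) \<and>
      (\<forall>l\<in>I. \<forall>c\<in>C l i. mu i l i (x i l) c \<in> r_jacobson (C i i) (mu i i i))}"

lemma row_prod_zero:
  assumes x: "x \<in> Acar" and r: "r \<in> Acar" and row: "\<And>l. x k l = 0"
  shows "pm x r k l = 0"
proof (cases "k \<in> I \<and> l \<in> I")
  case True
  have "pm x r k l = (\<Sum>m\<in>cs x. mu k m l (x k m) (r m l))"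
    using pm_formula[OF x r cs_fin[OF x] cs_sub[OF x] subset_refl] True by blast
  also have "\<dots> = 0"
    by (rule sum.neutral) (use True row cs_sub[OF x] car_entry[OF r] mu_0l in auto)
  finally show ?thesis .
next
  case False then show ?thesis using pm_out by blast
qed

lemma Lrow_qrr:
  assumes i: "i \<in> I"
  shows "qrr Acar pm (Lrow i)"
proof -
  interpret Ci: rng "C i i" "mu i i i" by (rule Cii_rng[OF i])
  let ?D = "r_jacobson (C i i) (mu i i i)"
  have Did: "r_ideal (C i i) (mu i i i) ?D" by (rule Ci.jac_ideal)
  show ?thesis
    unfolding qrr_def
  proof (intro conjI ballI subsetI)
    fix x assume "x \<in> Lrow i" then show "x \<in> Acar" unfolding Lrow_def by blast
  next
    have "0 \<in> ?D" using Ci.ideal_0[OF Did] .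
    moreover have "mu i l i 0 c = 0" if "l \<in> I" "c \<in> C l i" for l c using mu_0l i that by simp
    ultimately show "0 \<in> Lrow i" unfolding Lrow_def using car_zero by auto
  next
    fix x y assume x: "x \<in> Lrow i" and y: "y \<in> Lrow i"
    have xA: "x \<in> Acar" and yA: "y \<in> Acar" using x y unfolding Lrow_def by auto
    show "x - y \<in> Lrow i"
      unfolding Lrow_def
    proof (intro CollectI conjI allI impI ballI)
      show "x - y \<in> Acar" using car_diff xA yA by blast
      fix k l assume "k \<noteq> i" then show "(x - y) k l = 0" using x y unfolding Lrow_def by auto
    next
      show "(x - y) i i \<in> ?D" using x y Ci.ideal_diff[OF Did] unfolding Lrow_def by auto
    next
      fix l c assume l: "l \<in> I" and c: "c \<in> C l i"
      have "mu i l i ((x - y) i l) c = mu i l i (x i l) c - mu i l i (y i l) c"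
        using mu_diffl[OF i l i car_entry[OF xA i l] car_entry[OF yA i l] c] by simp
      then show "mu i l i ((x - y) i l) c \<in> ?D" using x y l c Ci.ideal_diff[OF Did] unfolding Lrow_def by auto
    qed
  next
    fix x r assume x: "x \<in> Lrow i" and r: "r \<in> Acar"
    have xA: "x \<in> Acar" using x unfolding Lrow_def by auto
    have xrow: "\<And>k l. k \<noteq> i \<Longrightarrow> x k l = 0" using x unfolding Lrow_def by auto
    have xc: "\<And>l c. l \<in> I \<Longrightarrow> c \<in> C l i \<Longrightarrow> mu i l i (x i l) c \<in> ?D" using x unfolding Lrow_def by auto
    have K: "finite (cs x)" "cs x \<subseteq> I" using cs_fin cs_sub xA by auto
    show "pm x r \<in> Lrow i"
      unfolding Lrow_def
    proof (intro CollectI conjI allI impI ballI)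
      show "pm x r \<in> Acar" using pm_closed xA r by blast
      fix k l assume "k \<noteq> i" then show "pm x r k l = 0" using row_prod_zero[OF xA r] xrow by blast
    next
      have "pm x r i i = (\<Sum>m\<in>cs x. mu i m i (x i m) (r m i))"
        using pm_formula[OF xA r K subset_refl i i] .
      also have "\<dots> \<in> ?D"
        by (rule Ci.ideal_sum[OF Did]) (use xc K car_entry[OF r] i in auto)
      finally show "pm x r i i \<in> ?D" .
    next
      fix l c assume l: "l \<in> I" and c: "c \<in> C l i"
      have "mu i l i (pm x r i l) c = mu i l i (\<Sum>m\<in>cs x. mu i m l (x i m) (r m l)) c"
        using pm_formula[OF xA r K subset_refl i l] by simp
      also have "\<dots> = (\<Sum>m\<in>cs x. mu i l i (mu i m l (x i m) (r m l)) c)"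
      proof (rule mu_suml[OF i l i _ c])
        fix m assume "m \<in> cs x" then have "m \<in> I" using K by blast
        then show "mu i m l (x i m) (r m l) \<in> C i l"
          using mu_closed[OF i _ l car_entry[OF xA i] car_entry[OF r _ l]] by blast
      qed
      also have "\<dots> = (\<Sum>m\<in>cs x. mu i m i (x i m) (mu m l i (r m l) c))"
      proof (rule sum.cong[OF refl])
        fix m assume "m \<in> cs x" then have m: "m \<in> I" using K by blast
        show "mu i l i (mu i m l (x i m) (r m l)) c = mu i m i (x i m) (mu m l i (r m l) c)"
          by (rule mu_assoc[OF i m l i car_entry[OF xA i m] car_entry[OF r m l] c])
      qed
      also have "\<dots> \<in> ?D"
      proof (rule Ci.ideal_sum[OF Did])
        fix m assume "m \<in> cs x" then have m: "m \<in> I" using K by blast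
        show "mu i m i (x i m) (mu m l i (r m l) c) \<in> ?D"
          using xc[OF m mu_closed[OF m l i car_entry[OF r m l] c]] .
      qed
      finally show "mu i l i (pm x r i l) c \<in> ?D" .
    qed
  next
    fix x assume x: "x \<in> Lrow i"
    have xA: "x \<in> Acar" using x unfolding Lrow_def by auto
    have xrow: "\<And>k l. k \<noteq> i \<Longrightarrow> x k l = 0" using x unfolding Lrow_def by auto
    have "x i i \<in> ?D" using x unfolding Lrow_def by auto
    then have "r_rqr (C i i) (mu i i i) (x i i)" by (rule Ci.jac_rqr)
    then obtain w where w: "w \<in> C i i" and w2: "x i i + w - mu i i i (x i i) w = 0" unfolding r_rqr_def by blast
    define y where "y = (\<lambda>k l. if k = i \<and> l \<in> I then - x i l + mu i i l w (x i l) else 0)"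
    have yA: "y \<in> Acar"
    proof (rule carI)
      fix k l assume "k \<in> I" "l \<in> I"
      show "y k l \<in> C k l"
      proof (cases "k = i")
        case True
        then show ?thesis unfolding y_def using \<open>l \<in> I\<close> Cadd[OF i \<open>l \<in> I\<close> Cneg[OF i \<open>l \<in> I\<close> car_entry[OF xA i \<open>l \<in> I\<close>]]
            mu_closed[OF i i \<open>l \<in> I\<close> w car_entry[OF xA i \<open>l \<in> I\<close>]]] by simp
      next
        case False then show ?thesis unfolding y_def using C0 \<open>k \<in> I\<close> \<open>l \<in> I\<close> by simp
      qed
    next
      fix k l assume "\<not> (k \<in> I \<and> l \<in> I)" then show "y k l = 0" unfolding y_def using i by auto
    next
      have "supp2 y \<subseteq> supp2 x"
      proof
        fix q assume "q \<in> supp2 y"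
        then obtain k l where q: "q = (k, l)" "y k l \<noteq> 0" unfolding supp2_def by auto
        then have "x k l \<noteq> 0" unfolding y_def using mu_0r i w by (auto split: if_splits)
        then show "q \<in> supp2 x" using q unfolding supp2_def by auto
      qed
      then show "finite (supp2 y)" using car_fin[OF xA] finite_subset by blast
    qed
    have "x + y - pm x y = 0"
    proof (rule ext, rule ext)
      fix k l
      show "(x + y - pm x y) k l = 0 k l"
      proof (cases "k = i \<and> l \<in> I")
        case True
        then have l: "l \<in> I" and k: "k = i" by auto
        have "pm x y i l = mu i i l (x i i) (y i l)"
          by (rule pm_single[OF xA yA i i l]) (auto simp: y_def)
        also have "\<dots> = mu i i l (x i i) (- x i l + mu i i l w (x i l))" using l by (simp add: y_def)
        also have "\<dots> = - mu i i l (x i i) (x i l) + mu i i l (mu i i i (x i i) w) (x i l)"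
          using mu_addr[OF i i l car_entry[OF xA i i] Cneg[OF i l car_entry[OF xA i l]] mu_closed[OF i i l w car_entry[OF xA i l]]]
            mu_negr[OF i i l car_entry[OF xA i i] car_entry[OF xA i l]]
            mu_assoc[OF i i i l car_entry[OF xA i i] w car_entry[OF xA i l]] by simp
        finally have e1: "pm x y i l = - mu i i l (x i i) (x i l) + mu i i l (mu i i i (x i i) w) (x i l)" .
        have xw: "mu i i i (x i i) w \<in> C i i" using mu_closed[OF i i i car_entry[OF xA i i] w] .
        have "mu i i l (x i i + w - mu i i i (x i i) w) (x i l)
            = mu i i l (x i i) (x i l) + mu i i l w (x i l) - mu i i l (mu i i i (x i i) w) (x i l)"
          using mu_diffl[OF i i l Cadd[OF i i car_entry[OF xA i i] w] xw car_entry[OF xA i l]]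
            mu_addl[OF i i l car_entry[OF xA i i] w car_entry[OF xA i l]] by simp
        moreover have "mu i i l (x i i + w - mu i i i (x i i) w) (x i l) = 0"
          using w2 mu_0l[OF i i l car_entry[OF xA i l]] by simp
        ultimately have F: "mu i i l (x i i) (x i l) + mu i i l w (x i l) - mu i i l (mu i i i (x i i) w) (x i l) = 0"
          by simp
        have yl: "y i l = - x i l + mu i i l w (x i l)" using l by (simp add: y_def)
        have "(x + y - pm x y) i l = x i l + y i l - pm x y i l" by simp
        also have "\<dots> = mu i i l (x i i) (x i l) + mu i i l w (x i l) - mu i i l (mu i i i (x i i) w) (x i l)"
          unfolding yl e1 by (simp add: algebra_simps)
        finally show ?thesis using F k by simp
      next
        case False
        have "x k l = 0"
          using False xrow car_out[OF xA] i by (cases "k = i") auto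
        moreover have "y k l = 0" using False by (auto simp: y_def)
        moreover have "pm x y k l = 0"
        proof (cases "k = i")
          case True then have "l \<notin> I" using False by blast
          then show ?thesis using pm_out by blast
        next
          case False then show ?thesis using row_prod_zero[OF xA yA] xrow by blast
        qed
        ultimately show ?thesis by simp
      qed
    qed
    then show "r_rqr Acar pm x" unfolding r_rqr_def using yA by blast
  qed
qed

lemma E_in_JA:
  assumes ij: "i \<in> I" "j \<in> I" and n: "n \<in> C i j" and q: "g_rqr (C i j) (C j i) (tt i j) n"
  shows "E i j n \<in> r_jacobson Acar pm"
proof -
  interpret A: rng Acar pm by (rule A_rng)
  interpret Ci: rng "C i i" "mu i i i" by (rule Cii_rng[OF ij(1)])
  let ?D = "r_jacobson (C i i) (mu i i i)"
  have nD: "mu i j i n g \<in> ?D" if "g \<in> C j i" for g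
    using Ci.qrr_sub_jac[OF nC_qrr[OF ij n q]] that by blast
  show ?thesis
  proof (rule A.jac_b[OF E_car[OF ij n]])
    fix y assume y: "y \<in> Acar"
    have e: "pm (E i j n) y k l = (if k = i \<and> l \<in> I then mu i j l n (y j l) else 0)" for k l
      using pm_E_left[OF ij n y] .
    have "pm (E i j n) y \<in> Lrow i"
      unfolding Lrow_def
    proof (intro CollectI conjI allI impI ballI)
      show "pm (E i j n) y \<in> Acar" using pm_closed E_car[OF ij n] y by blast
      fix k l assume "k \<noteq> i" then show "pm (E i j n) y k l = 0" using e by simp
    next
      show "pm (E i j n) y i i \<in> ?D" using e ij nD car_entry[OF y ij(2) ij(1)] by simp
    next
      fix l c assume l: "l \<in> I" and c: "c \<in> C l i"
      have "mu i l i (pm (E i j n) y i l) c = mu i l i (mu i j l n (y j l)) c" using e l by simp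
      also have "\<dots> = mu i j i n (mu j l i (y j l) c)"
        by (rule mu_assoc[OF ij(1) ij(2) l ij(1) n car_entry[OF y ij(2) l] c])
      also have "\<dots> \<in> ?D" using nD mu_closed[OF ij(2) l ij(1) car_entry[OF y ij(2) l] c] by blast
      finally show "mu i l i (pm (E i j n) y i l) c \<in> ?D" .
    qed
    then show "pm (E i j n) y \<in> r_jacobson Acar pm" using A.qrr_sub_jac[OF Lrow_qrr[OF ij(1)]] by blast
  qed
qed

lemma jac_eq_gm: "r_jacobson Acar pm = gm_sum I C (comp_rad Jacobson C mu)"
proof -
  interpret A: rng Acar pm by (rule A_rng)
  let ?J = "r_jacobson Acar pm"
  show ?thesis
  proof
    show "?J \<subseteq> gm_sum I C (comp_rad Jacobson C mu)"
    proof
      fix x assume x: "x \<in> ?J"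
      have xA: "x \<in> Acar" using x A.ideal_sub[OF A.jac_ideal] by blast
      have "x i j \<in> g_jacobson (C i j) (C j i) (tt i j)" if ij: "i \<in> I" "j \<in> I" for i j
      proof -
        have "Pr i j ?J \<subseteq> g_jacobson (C i j) (C j i) (tt i j)"
          by (rule gjac_ge[OF Pr_gideal[OF A.jac_ideal ij]]) (use Pr_rqr[OF A.jac_ideal A.jac_rqr ij] in blast)
        moreover have "x i j \<in> Pr i j ?J" unfolding Pr_def using x by blast
        ultimately show ?thesis by blast
      qed
      then show "x \<in> gm_sum I C (comp_rad Jacobson C mu)"
        unfolding gm_sum_def comp_rad_def using xA by simp
    qed
  next
    show "gm_sum I C (comp_rad Jacobson C mu) \<subseteq> ?J"
    proof
      fix x assume x: "x \<in> gm_sum I C (comp_rad Jacobson C mu)"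
      have xA: "x \<in> Acar" and xc: "\<And>i j. i \<in> I \<Longrightarrow> j \<in> I \<Longrightarrow> x i j \<in> g_jacobson (C i j) (C j i) (tt i j)"
        using x unfolding gm_sum_def comp_rad_def by auto
      show "x \<in> ?J"
      proof (rule decomp_ideal[OF A.jac_ideal xA])
        fix i j assume ij: "i \<in> I" "j \<in> I"
        have "g_jacobson (C i j) (C j i) (tt i j) \<subseteq> {z \<in> C i j. E i j z \<in> ?J}"
        proof (rule gjac_le[OF proj_gideal[OF A.jac_ideal ij]])
          fix N assume N: "g_ideal (C i j) (C j i) (tt i j) N" and Nq: "\<forall>x\<in>N. g_rqr (C i j) (C j i) (tt i j) x"
          show "N \<subseteq> {z \<in> C i j. E i j z \<in> ?J}"
          proof
            fix n assume n: "n \<in> N"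
            have nC: "n \<in> C i j" using n gid_sub[OF N] by blast
            show "n \<in> {z \<in> C i j. E i j z \<in> ?J}" using E_in_JA[OF ij nC] Nq n nC by blast
          qed
        qed
        then show "E i j (x i j) \<in> ?J" using xc[OF ij] by blast
      qed
    qed
  qed
qed

end

inductive_set ac :: "'r::ab_group_add set \<Rightarrow> 'r set" for G where
  ac0: "0 \<in> ac G"
| acG: "g \<in> G \<Longrightarrow> g \<in> ac G"
| acD: "a \<in> ac G \<Longrightarrow> b \<in> ac G \<Longrightarrow> a - b \<in> ac G"

lemma ac_mono:
  assumes "G \<subseteq> H" "x \<in> ac G" shows "x \<in> ac H"
  using assms(2) by induction (use assms(1) in \<open>auto intro: ac.intros\<close>)

lemma ac_neg: "b \<in> ac G \<Longrightarrow> - b \<in> ac G"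
  using acD[OF ac0, of b G] by simp

lemma ac_add: "a \<in> ac G \<Longrightarrow> b \<in> ac G \<Longrightarrow> a + b \<in> ac G"
  using acD[of a G "- b"] ac_neg by fastforce

lemma ac_sum: "(\<And>k. k \<in> K \<Longrightarrow> f k \<in> ac G) \<Longrightarrow> sum f K \<in> ac G"
proof (induction K rule: infinite_finite_induct)
  case (infinite A) then show ?case using ac0 by simp
next
  case empty then show ?case using ac0 by simp
next
  case (insert a F) then show ?case using ac_add[of "f a" G "sum f F"] by simp
qed

lemma ac_fin1: "x \<in> ac G \<Longrightarrow> \<exists>G'. finite G' \<and> G' \<subseteq> G \<and> x \<in> ac G'"
proof (induction x rule: ac.induct)
  case ac0
  have "(0::'a) \<in> ac {}" by (rule ac.ac0)
  then show ?case by blast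
next
  case (acG g)
  have "g \<in> ac {g}" by (rule ac.acG) simp
  then show ?case using acG by (intro exI[of _ "{g}"]) simp
next
  case (acD a b)
  then obtain G1 G2 where G: "finite G1" "G1 \<subseteq> G" "a \<in> ac G1" "finite G2" "G2 \<subseteq> G" "b \<in> ac G2" by blast
  have "a \<in> ac (G1 \<union> G2)" using ac_mono[of G1 "G1 \<union> G2" a] G by blast
  moreover have "b \<in> ac (G1 \<union> G2)" using ac_mono[of G2 "G1 \<union> G2" b] G by blast
  ultimately have "a - b \<in> ac (G1 \<union> G2)" by (rule ac.acD)
  then show ?case using G by (intro exI[of _ "G1 \<union> G2"]) simp
qed

lemma ac_fin: "finite F \<Longrightarrow> F \<subseteq> ac G \<Longrightarrow> \<exists>G'. finite G' \<and> G' \<subseteq> G \<and> F \<subseteq> ac G'"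
proof (induction F rule: finite_induct)
  case empty
  have "finite {}" "{} \<subseteq> G" "{} \<subseteq> ac {}" by auto
  then show ?case by blast
next
  case (insert x F)
  have "F \<subseteq> ac G" using insert.prems by blast
  then obtain G1 where G1: "finite G1" "G1 \<subseteq> G" "F \<subseteq> ac G1" using insert.IH by blast
  have "x \<in> ac G" using insert.prems by blast
  then obtain G2 where G2: "finite G2" "G2 \<subseteq> G" "x \<in> ac G2" using ac_fin1[of x G] by blast
  have "F \<subseteq> ac (G1 \<union> G2)"
  proof
    fix y assume "y \<in> F"
    then have "y \<in> ac G1" using G1 by blast
    then show "y \<in> ac (G1 \<union> G2)" by (rule ac_mono[rotated]) blast
  qed
  moreover have "x \<in> ac (G1 \<union> G2)" using G2(3) by (rule ac_mono[rotated]) blast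
  moreover have "finite (G1 \<union> G2)" "G1 \<union> G2 \<subseteq> G" using G1 G2 by auto
  ultimately show ?case by blast
qed

fun lpl :: "('r \<Rightarrow> 'r \<Rightarrow> 'r) \<Rightarrow> 'r::zero list \<Rightarrow> 'r" where
  "lpl p [] = 0"
| "lpl p (x # xs) = lprod p x xs"

lemma lpl_cons2: "lpl p (x # y # ys) = p x (lpl p (y # ys))"
  by simp

context rng
begin

lemma lprod_closed: "x \<in> R \<Longrightarrow> set xs \<subseteq> R \<Longrightarrow> lprod p x xs \<in> R"
  by (induction xs arbitrary: x) (auto intro: mult)

lemma lpl_closed: "set xs \<subseteq> R \<Longrightarrow> lpl p xs \<in> R"
  by (cases xs) (auto intro: lprod_closed zero)

lemma lprod_snoc: "x \<in> R \<Longrightarrow> set xs \<subseteq> R \<Longrightarrow> y \<in> R \<Longrightarrow> lprod p x (xs @ [y]) = p (lprod p x xs) y"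
proof (induction xs arbitrary: x)
  case Nil then show ?case by simp
next
  case (Cons z zs)
  then show ?case by (simp add: assoc lprod_closed)
qed

lemma lpl_lin:
  assumes "set us \<subseteq> R" "set vs \<subseteq> R" "a \<in> R" "b \<in> R"
  shows "lpl p (us @ (a - b) # vs) = lpl p (us @ a # vs) - lpl p (us @ b # vs)"
  using assms
proof (induction us)
  case Nil
  then show ?case
  proof (cases vs)
    case Nil then show ?thesis by simp
  next
    case (Cons v vs')
    then have "lpl p ((a - b) # vs) = p (a - b) (lpl p vs)" by simp
    also have "\<dots> = p a (lpl p vs) - p b (lpl p vs)" using ldiff Nil lpl_closed by auto
    finally show ?thesis using Cons by simp
  qed
next
  case (Cons u us)
  have "lpl p ((u # us) @ (a - b) # vs) = p u (lpl p (us @ (a - b) # vs))"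
    by (cases us) auto
  also have "\<dots> = p u (lpl p (us @ a # vs) - lpl p (us @ b # vs))" using Cons by simp
  also have "\<dots> = p u (lpl p (us @ a # vs)) - p u (lpl p (us @ b # vs))"
    using Cons.prems by (intro rdiff) (auto intro!: lpl_closed diff)
  also have "p u (lpl p (us @ a # vs)) = lpl p ((u # us) @ a # vs)" by (cases us) auto
  also have "p u (lpl p (us @ b # vs)) = lpl p ((u # us) @ b # vs)" by (cases us) auto
  finally show ?case .
qed

lemma lpl_zero:
  assumes "set us \<subseteq> R" "set vs \<subseteq> R"
  shows "lpl p (us @ 0 # vs) = 0"
  using lpl_lin[OF assms zero zero] by simp

lemma locnil_ac:
  assumes GR: "G \<subseteq> R" and G: "r_loc_nilpotent p G"
  shows "r_loc_nilpotent p (ac G)"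
  unfolding r_loc_nilpotent_def
proof (intro allI impI)
  fix F assume F: "finite F \<and> F \<subseteq> ac G"
  then have "\<exists>G'. finite G' \<and> G' \<subseteq> G \<and> F \<subseteq> ac G'" using ac_fin[of F G] by blast
  then obtain G' where G': "finite G'" "G' \<subseteq> G" "F \<subseteq> ac G'" by blast
  have "\<exists>n. \<forall>x xs. x \<in> G' \<and> set xs \<subseteq> G' \<and> length xs = n \<longrightarrow> lprod p x xs = 0"
    using G[unfolded r_loc_nilpotent_def, rule_format, of G'] G'(1,2) by simp
  then obtain n where n: "\<And>x xs. x \<in> G' \<Longrightarrow> set xs \<subseteq> G' \<Longrightarrow> length xs = n \<Longrightarrow> lprod p x xs = 0"
    by blast
  have acR: "ac G' \<subseteq> R"
  proof
    fix x assume "x \<in> ac G'" then show "x \<in> R"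
    proof (induction x rule: ac.induct)
      case ac0 show ?case by (rule zero)
    next
      case (acG g) then show ?case using G'(2) GR by blast
    next
      case (acD a b) then show ?case using diff by blast
    qed
  qed
  have main: "\<forall>vs. set vs \<subseteq> G' \<longrightarrow> length us + length vs = Suc n \<longrightarrow> lpl p (us @ vs) = 0"
    if "set us \<subseteq> ac G'" for us
    using that
  proof (induction us rule: rev_induct)
    case Nil
    show ?case
    proof (intro allI impI)
      fix vs assume vs: "set vs \<subseteq> G'" "length [] + length vs = Suc n"
      then obtain x xs where xs: "vs = x # xs" "length xs = n" by (cases vs) auto
      have "lprod p x xs = 0" by (rule n) (use xs vs in auto)
      then show "lpl p ([] @ vs) = 0" using xs by simp
    qed
  next
    case (snoc w us)
    have us: "set us \<subseteq> ac G'" and w: "w \<in> ac G'" using snoc.prems by auto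
    show ?case
    proof (intro allI impI)
      fix vs assume vs: "set vs \<subseteq> G'" "length (us @ [w]) + length vs = Suc n"
      have usR: "set us \<subseteq> R" and vsR: "set vs \<subseteq> R" using us vs acR G' GR by auto
      have "lpl p (us @ w # vs) = 0" using w
      proof (induction w rule: ac.induct)
        case ac0 then show ?case using lpl_zero[OF usR vsR] by simp
      next
        case (acG g)
        then have "set (g # vs) \<subseteq> G'" using vs by auto
        moreover have "length us + length (g # vs) = Suc n" using vs by simp
        ultimately show ?case using snoc.IH[OF us] by simp
      next
        case (acD a b)
        have "a \<in> R" "b \<in> R" using acD.hyps acR by auto
        then show ?case using lpl_lin[OF usR vsR] acD.IH by simp
      qed
      then show "lpl p ((us @ [w]) @ vs) = 0" by simp
    qed
  qed
  show "\<exists>n. \<forall>x xs. x \<in> F \<and> set xs \<subseteq> F \<and> length xs = n \<longrightarrow> lprod p x xs = 0"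
  proof (intro exI allI impI)
    fix x xs assume h: "x \<in> F \<and> set xs \<subseteq> F \<and> length xs = n"
    then have "set (x # xs) \<subseteq> ac G'" using G' by auto
    then have "lpl p ((x # xs) @ []) = 0" using main[of "x # xs"] h by simp
    then show "lprod p x xs = 0" by simp
  qed
qed

lemma ac_ideal:
  assumes GR: "G \<subseteq> R" and Gl: "\<And>g r. g \<in> G \<Longrightarrow> r \<in> R \<Longrightarrow> p g r \<in> G"
    and Gr: "\<And>g r. g \<in> G \<Longrightarrow> r \<in> R \<Longrightarrow> p r g \<in> G"
  shows "r_ideal R p (ac G)"
proof -
  have acR: "ac G \<subseteq> R"
  proof
    fix x assume "x \<in> ac G" then show "x \<in> R"
    proof (induction x rule: ac.induct)
      case ac0 show ?case by (rule zero)
    next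
      case (acG g) then show ?case using GR by blast
    next
      case (acD a b) then show ?case using diff by blast
    qed
  qed
  have ml: "p x r \<in> ac G" if "x \<in> ac G" "r \<in> R" for x r
    using that
  proof (induction x rule: ac.induct)
    case ac0 then show ?case using p0l ac.ac0 by simp
  next
    case (acG g) then show ?case using Gl ac.acG by blast
  next
    case (acD a b)
    then have "p (a - b) r = p a r - p b r" using ldiff acR by blast
    then show ?case using acD ac.acD by simp
  qed
  have mr: "p r x \<in> ac G" if "x \<in> ac G" "r \<in> R" for x r
    using that
  proof (induction x rule: ac.induct)
    case ac0 then show ?case using p0r ac.ac0 by simp
  next
    case (acG g) then show ?case using Gr ac.acG by blast
  next
    case (acD a b)
    then have "p r (a - b) = p r a - p r b" using rdiff acR by blast
    then show ?case using acD ac.acD by simp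
  qed
  show ?thesis unfolding r_ideal_def using acR ac.ac0 ac.acD ml mr by blast
qed

lemma lev_sub_ac: "r_levitzki R p \<subseteq> ac (\<Union>{J. r_ideal R p J \<and> r_loc_nilpotent p J})"
proof -
  let ?G = "\<Union>{J. r_ideal R p J \<and> r_loc_nilpotent p J}"
  have "r_ideal R p (ac ?G)"
  proof (rule ac_ideal)
    show "?G \<subseteq> R" using ideal_sub by blast
  next
    fix g r assume "g \<in> ?G" "r \<in> R"
    then obtain J where J: "r_ideal R p J" "r_loc_nilpotent p J" "g \<in> J" by blast
    then have "p g r \<in> J" "p r g \<in> J" using ideal_l ideal_r \<open>r \<in> R\<close> by auto
    then show "p g r \<in> ?G" "p r g \<in> ?G" using J by blast+
  qed
  moreover have "J \<subseteq> ac ?G" if "r_ideal R p J \<and> r_loc_nilpotent p J" for J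
    using that by (auto intro: ac.acG)
  ultimately show ?thesis unfolding r_levitzki_def by blast
qed

lemma lev_ideal: "r_ideal R p (r_levitzki R p)"
  unfolding r_levitzki_def by (rule ideal_Inter) blast

lemma locnil_sub_lev: "r_ideal R p J \<Longrightarrow> r_loc_nilpotent p J \<Longrightarrow> J \<subseteq> r_levitzki R p"
  unfolding r_levitzki_def using ideal_sub by blast

end

fun lo :: "('r \<Rightarrow> 'r \<Rightarrow> 'r) \<Rightarrow> 'r option \<Rightarrow> 'r \<Rightarrow> 'r" where
  "lo p None l = l"
| "lo p (Some a) l = p a l"

fun ro :: "('r \<Rightarrow> 'r \<Rightarrow> 'r) \<Rightarrow> 'r \<Rightarrow> 'r option \<Rightarrow> 'r" where
  "ro p l None = l"
| "ro p l (Some a) = p l a"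

fun rhd :: "('r \<Rightarrow> 'r \<Rightarrow> 'r) \<Rightarrow> 'r \<Rightarrow> ('r option \<times> 'r) list \<Rightarrow> 'r" where
  "rhd p l [] = l"
| "rhd p l ((a, l') # qs) = ro p l a"

fun rtl :: "('r \<Rightarrow> 'r \<Rightarrow> 'r) \<Rightarrow> ('r option \<times> 'r) list \<Rightarrow> 'r list" where
  "rtl p [] = []"
| "rtl p ((a, l') # qs) = rhd p l' qs # rtl p qs"

lemma rtl_length: "length (rtl p qs) = length qs"
  by (induction qs) auto

context rng
begin

lemma lo_closed: "set_option a \<subseteq> R \<Longrightarrow> l \<in> R \<Longrightarrow> lo p a l \<in> R"
  by (cases a) (auto intro: mult)

lemma ro_closed: "set_option a \<subseteq> R \<Longrightarrow> l \<in> R \<Longrightarrow> ro p l a \<in> R"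
  by (cases a) (auto intro: mult)

lemma rhd_closed: "l \<in> R \<Longrightarrow> (\<forall>q\<in>set qs. set_option (fst q) \<subseteq> R \<and> snd q \<in> R) \<Longrightarrow> rhd p l qs \<in> R"
  by (cases qs) (auto intro: ro_closed)

lemma rtl_closed: "(\<forall>q\<in>set qs. set_option (fst q) \<subseteq> R \<and> snd q \<in> R) \<Longrightarrow> set (rtl p qs) \<subseteq> R"
proof (induction qs)
  case Nil then show ?case by simp
next
  case (Cons q qs) then show ?case by (cases q) (auto intro: rhd_closed)
qed

lemma regroup:
  assumes "set_option a \<subseteq> R" "l \<in> R" "\<forall>q\<in>set qs. set_option (fst q) \<subseteq> R \<and> snd q \<in> R"
  shows "lprod p (lo p a l) (map (\<lambda>q. lo p (fst q) (snd q)) qs) = lo p a (lprod p (rhd p l qs) (rtl p qs))"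
  using assms
proof (induction qs arbitrary: a l)
  case Nil then show ?case by simp
next
  case (Cons q qs)
  obtain a' l' where q: "q = (a', l')" by force
  have a': "set_option a' \<subseteq> R" and l': "l' \<in> R" and qsR: "\<forall>q\<in>set qs. set_option (fst q) \<subseteq> R \<and> snd q \<in> R"
    using Cons.prems q by auto
  let ?W = "lprod p (rhd p l' qs) (rtl p qs)"
  have W: "?W \<in> R" using lprod_closed rhd_closed[OF l' qsR] rtl_closed[OF qsR] by blast
  have "lprod p (lo p a l) (map (\<lambda>q. lo p (fst q) (snd q)) (q # qs))
      = p (lo p a l) (lprod p (lo p a' l') (map (\<lambda>q. lo p (fst q) (snd q)) qs))"
    using q by simp
  also have "\<dots> = p (lo p a l) (lo p a' ?W)" using Cons.IH[OF a' l' qsR] by simp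
  also have "\<dots> = lo p a (p (ro p l a') ?W)"
  proof (cases a; cases a')
    fix c b assume "a = Some c" "a' = Some b"
    then show ?thesis using Cons.prems(1,2) a' W by (simp add: assoc mult)
  next
    fix c assume "a = Some c" "a' = None"
    then show ?thesis using Cons.prems(1,2) a' W by (simp add: assoc mult)
  next
    fix b assume "a = None" "a' = Some b"
    then show ?thesis using Cons.prems(1,2) a' W by (simp add: assoc mult)
  next
    assume "a = None" "a' = None"
    then show ?thesis by simp
  qed
  also have "\<dots> = lo p a (lprod p (rhd p l (q # qs)) (rtl p (q # qs)))" using q by simp
  finally show ?case .
qed

lemma lo_zero: "set_option a \<subseteq> R \<Longrightarrow> lo p a 0 = 0"
  by (cases a) (auto simp: p0r)

lemma locnil_right_ideal:
  assumes LR: "L \<subseteq> R" and L0: "0 \<in> L" and Ld: "\<And>x y. x \<in> L \<Longrightarrow> y \<in> L \<Longrightarrow> x - y \<in> L"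
    and Lr: "\<And>x r. x \<in> L \<Longrightarrow> r \<in> R \<Longrightarrow> p x r \<in> L" and Ln: "r_loc_nilpotent p L"
  shows "L \<subseteq> r_levitzki R p"
proof -
  define G where "G = L \<union> {p a l |a l. a \<in> R \<and> l \<in> L}"
  have GR: "G \<subseteq> R" unfolding G_def using LR mult by blast
  have Gid: "r_ideal R p (ac G)"
  proof (rule ac_ideal[OF GR])
    fix g r assume g: "g \<in> G" and r: "r \<in> R"
    show "p g r \<in> G"
    proof (cases "g \<in> L")
      case True then show ?thesis using Lr r unfolding G_def by blast
    next
      case False
      then obtain a l where al: "g = p a l" "a \<in> R" "l \<in> L" using g unfolding G_def by blast
      then have "p g r = p a (p l r)" using assoc LR r by blast
      then show ?thesis using al Lr r unfolding G_def by blast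
    qed
    show "p r g \<in> G"
    proof (cases "g \<in> L")
      case True then show ?thesis using r unfolding G_def by blast
    next
      case False
      then obtain a l where al: "g = p a l" "a \<in> R" "l \<in> L" using g unfolding G_def by blast
      then have "p r g = p (p r a) l" using assoc LR r by auto
      moreover have "p r a \<in> R" using mult r al by blast
      ultimately show ?thesis using al unfolding G_def by blast
    qed
  qed
  have Gn: "r_loc_nilpotent p G"
    unfolding r_loc_nilpotent_def
  proof (intro allI impI)
    fix F assume F: "finite F \<and> F \<subseteq> G"
    define Rep where "Rep = {q. set_option (fst q) \<subseteq> R \<and> snd q \<in> L}"
    have ex: "\<exists>q. q \<in> Rep \<and> lo p (fst q) (snd q) = f" if fG: "f \<in> G" for f
    proof (cases "f \<in> L")
      case True then show ?thesis unfolding Rep_def by (intro exI[of _ "(None, f)"]) auto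
    next
      case False
      then obtain a l where al: "f = p a l" "a \<in> R" "l \<in> L" using fG unfolding G_def by blast
      then show ?thesis unfolding Rep_def by (intro exI[of _ "(Some a, l)"]) auto
    qed
    define rep where "rep f = (SOME q. q \<in> Rep \<and> lo p (fst q) (snd q) = f)" for f
    have rep: "rep f \<in> Rep \<and> lo p (fst (rep f)) (snd (rep f)) = f" if "f \<in> G" for f
      unfolding rep_def using someI_ex[OF ex[OF that]] .
    define F' where "F' = {ro p (snd (rep f)) (fst (rep g)) |f g. f \<in> F \<and> g \<in> F} \<union> snd ` rep ` F"
    have F'fin: "finite F'"
    proof -
      have "{ro p (snd (rep f)) (fst (rep g)) |f g. f \<in> F \<and> g \<in> F} = (\<lambda>(f, g). ro p (snd (rep f)) (fst (rep g))) ` (F \<times> F)"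
        by auto
      then show ?thesis unfolding F'_def using F by simp
    qed
    have F'L: "F' \<subseteq> L"
    proof
      fix x assume "x \<in> F'"
      then consider (a) f g where "x = ro p (snd (rep f)) (fst (rep g))" "f \<in> F" "g \<in> F" | (b) f where "x = snd (rep f)" "f \<in> F"
        unfolding F'_def by blast
      then show "x \<in> L"
      proof cases
        case a
        have "rep f \<in> Rep" "rep g \<in> Rep" using rep a F by blast+
        then show ?thesis using a Lr unfolding Rep_def by (cases "fst (rep g)") auto
      next
        case b
        have "rep f \<in> Rep" using rep b F by blast
        then show ?thesis using b unfolding Rep_def by auto
      qed
    qed
    obtain n where n: "\<And>x xs. x \<in> F' \<Longrightarrow> set xs \<subseteq> F' \<Longrightarrow> length xs = n \<Longrightarrow> lprod p x xs = 0"
      using Ln[unfolded r_loc_nilpotent_def, rule_format, of F'] F'fin F'L by blast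
    have inF': "rhd p l qs \<in> F' \<and> set (rtl p qs) \<subseteq> F'"
      if "l \<in> snd ` rep ` F" "set qs \<subseteq> rep ` F" for l qs
      using that
    proof (induction qs arbitrary: l)
      case Nil then show ?case unfolding F'_def by simp
    next
      case (Cons q qs)
      obtain g where g: "g \<in> F" "q = rep g" using Cons.prems by auto
      obtain f where f: "f \<in> F" "l = snd (rep f)" using Cons.prems by auto
      have "rhd p l (q # qs) = ro p (snd (rep f)) (fst (rep g))" using f g by (cases "rep g") auto
      then have "rhd p l (q # qs) \<in> F'" unfolding F'_def using f g by blast
      moreover have "snd q \<in> snd ` rep ` F" using g by blast
      then have "rhd p (snd q) qs \<in> F' \<and> set (rtl p qs) \<subseteq> F'" using Cons.IH Cons.prems by auto
      moreover have "rtl p (q # qs) = rhd p (snd q) qs # rtl p qs" by (cases q) auto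
      ultimately show ?case by simp
    qed
    show "\<exists>n. \<forall>x xs. x \<in> F \<and> set xs \<subseteq> F \<and> length xs = n \<longrightarrow> lprod p x xs = 0"
    proof (intro exI allI impI)
      fix x xs assume h: "x \<in> F \<and> set xs \<subseteq> F \<and> length xs = n"
      have xG: "x \<in> G" and xsG: "set xs \<subseteq> G" using h F by auto
      let ?qs = "map rep xs"
      have repR: "set_option (fst (rep f)) \<subseteq> R \<and> snd (rep f) \<in> R" if "f \<in> G" for f
        using rep[OF that] LR unfolding Rep_def by auto
      have qsR: "\<forall>q\<in>set ?qs. set_option (fst q) \<subseteq> R \<and> snd q \<in> R" using xsG repR by auto
      have xs_eq: "xs = map (\<lambda>q. lo p (fst q) (snd q)) ?qs"
        using xsG rep by (induction xs) auto
      have x_eq: "x = lo p (fst (rep x)) (snd (rep x))" using rep xG by simp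
      have "lprod p x xs = lo p (fst (rep x)) (lprod p (rhd p (snd (rep x)) ?qs) (rtl p ?qs))"
        using regroup[of "fst (rep x)" "snd (rep x)" ?qs] repR[OF xG] qsR x_eq xs_eq by simp
      also have "lprod p (rhd p (snd (rep x)) ?qs) (rtl p ?qs) = 0"
      proof (rule n)
        have "snd (rep x) \<in> snd ` rep ` F" using h by blast
        moreover have "set ?qs \<subseteq> rep ` F" using h by auto
        ultimately show "rhd p (snd (rep x)) ?qs \<in> F'" "set (rtl p ?qs) \<subseteq> F'" using inF' by blast+
        show "length (rtl p ?qs) = n" using h by (simp add: rtl_length)
      qed
      finally show "lprod p x xs = 0" using lo_zero repR[OF xG] by simp
    qed
  qed
  have "ac G \<subseteq> r_levitzki R p" by (rule locnil_sub_lev[OF Gid locnil_ac[OF GR Gn]])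
  moreover have "L \<subseteq> ac G" unfolding G_def by (auto intro: ac.acG)
  ultimately show ?thesis by blast
qed

end

fun chd :: "('m \<Rightarrow> 'x) \<Rightarrow> ('x \<Rightarrow> 'g \<Rightarrow> 'x) \<Rightarrow> 'm \<Rightarrow> ('g \<times> 'm) list \<Rightarrow> 'x" where
  "chd xf mk x [] = xf x"
| "chd xf mk x ((g, y) # ys) = mk (xf x) g"

fun ctl :: "('m \<Rightarrow> 'x) \<Rightarrow> ('x \<Rightarrow> 'g \<Rightarrow> 'x) \<Rightarrow> ('g \<times> 'm) list \<Rightarrow> 'x list" where
  "ctl xf mk [] = []"
| "ctl xf mk ((g, y) # ys) = chd xf mk y ys # ctl xf mk ys"

lemma ctl_length: "length (ctl xf mk ys) = length ys"
  by (induction ys) auto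

lemma glev_ge: "g_ideal M G t N \<Longrightarrow> g_loc_nilpotent G t N \<Longrightarrow> N \<subseteq> g_levitzki M G t"
  unfolding g_levitzki_def using gid_sub by blast

lemma glev_le: "g_ideal M G t Q \<Longrightarrow> (\<And>N. g_ideal M G t N \<Longrightarrow> g_loc_nilpotent G t N \<Longrightarrow> N \<subseteq> Q)
   \<Longrightarrow> g_levitzki M G t \<subseteq> Q"
  unfolding g_levitzki_def by blast

context gmr
begin

lemma M_gideal: "i \<in> I \<Longrightarrow> j \<in> I \<Longrightarrow> g_ideal (C i j) (C j i) (tt i j) (C i j)"
  unfolding g_ideal_def using C0 Cdiff tt_closed by blast

lemma glev_gideal: "i \<in> I \<Longrightarrow> j \<in> I \<Longrightarrow> g_ideal (C i j) (C j i) (tt i j) (g_levitzki (C i j) (C j i) (tt i j))"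
  unfolding g_levitzki_def by (rule gid_Inter) (auto intro: M_gideal)

lemma conv:
  assumes ij: "i \<in> I" "j \<in> I" and xf: "\<And>f. f \<in> S \<Longrightarrow> xf f \<in> Acar \<and> xf f i j = f"
    and x: "x \<in> S" and ys: "set ys \<subseteq> C j i \<times> S"
  shows "lprod pm (chd xf (\<lambda>z g. pm z (E j i g)) x ys) (ctl xf (\<lambda>z g. pm z (E j i g)) ys) \<in> Acar \<and>
         lprod pm (chd xf (\<lambda>z g. pm z (E j i g)) x ys) (ctl xf (\<lambda>z g. pm z (E j i g)) ys) i j = gprod (tt i j) x ys"
  using x ys
proof (induction ys arbitrary: x)
  case Nil then show ?case using xf by simp
next
  case (Cons q ys)
  obtain g y where q: "q = (g, y)" by force
  have g: "g \<in> C j i" and y: "y \<in> S" and ys: "set ys \<subseteq> C j i \<times> S" using Cons.prems q by auto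
  let ?mk = "\<lambda>z g. pm z (E j i g)"
  let ?W = "lprod pm (chd xf ?mk y ys) (ctl xf ?mk ys)"
  have W: "?W \<in> Acar" "?W i j = gprod (tt i j) y ys" using Cons.IH[OF y ys] by auto
  have xA: "xf x \<in> Acar" and xe: "xf x i j = x" using xf Cons.prems by auto
  let ?u = "pm (xf x) (E j i g)"
  have uA: "?u \<in> Acar" using pm_closed xA E_car ij g by auto
  have ue: "?u a b = (if a \<in> I \<and> b = i then mu a j i (xf x a j) g else 0)" for a b
    using pm_E_right[OF ij(2) ij(1) g xA] .
  have "lprod pm (chd xf ?mk x (q # ys)) (ctl xf ?mk (q # ys)) = pm ?u ?W" using q by simp
  moreover have "pm ?u ?W \<in> Acar" using pm_closed uA W by blast
  moreover have "pm ?u ?W i j = mu i i j (?u i i) (?W i j)"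
    by (rule pm_single[OF uA W(1) ij(1) ij(1) ij(2)]) (use ue in auto)
  moreover have "?u i i = mu i j i x g" using ue ij xe by simp
  moreover have "tt i j x g (gprod (tt i j) y ys) = mu i i j (mu i j i x g) (gprod (tt i j) y ys)"
    by (rule tt_eq)
  ultimately show ?case using W q by simp
qed

lemma Pr_locnil:
  assumes X: "r_ideal Acar pm X" and Xn: "r_loc_nilpotent pm X" and ij: "i \<in> I" "j \<in> I"
  shows "g_loc_nilpotent (C j i) (tt i j) (Pr i j X)"
  unfolding g_loc_nilpotent_def
proof (intro allI impI)
  interpret A: rng Acar pm by (rule A_rng)
  fix F \<Phi> assume h: "finite F \<and> F \<subseteq> Pr i j X \<and> finite \<Phi> \<and> \<Phi> \<subseteq> C j i"
  have "\<forall>f\<in>F. \<exists>x. x \<in> X \<and> x i j = f" using h unfolding Pr_def by blast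
  then obtain xf where xf: "\<And>f. f \<in> F \<Longrightarrow> xf f \<in> X \<and> xf f i j = f" by metis
  have XA: "X \<subseteq> Acar" using A.ideal_sub[OF X] .
  let ?mk = "\<lambda>z g. pm z (E j i g)"
  define F' where "F' = xf ` F \<union> (\<lambda>(f, g). pm (xf f) (E j i g)) ` (F \<times> \<Phi>)"
  have F'fin: "finite F'" unfolding F'_def using h by simp
  have F'X: "F' \<subseteq> X"
    unfolding F'_def using xf h A.ideal_l[OF X] E_car ij by auto
  obtain n where n: "\<And>x xs. x \<in> F' \<Longrightarrow> set xs \<subseteq> F' \<Longrightarrow> length xs = n \<Longrightarrow> lprod pm x xs = 0"
    using Xn[unfolded r_loc_nilpotent_def, rule_format, of F'] F'fin F'X by blast
  have inF': "chd xf ?mk x ys \<in> F' \<and> set (ctl xf ?mk ys) \<subseteq> F'" if "x \<in> F" "set ys \<subseteq> \<Phi> \<times> F" for x ys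
    using that
  proof (induction ys arbitrary: x)
    case Nil then show ?case unfolding F'_def by simp
  next
    case (Cons q ys)
    obtain g y where q: "q = (g, y)" by force
    have "chd xf ?mk x (q # ys) \<in> F'" using q Cons.prems unfolding F'_def by auto
    moreover have "chd xf ?mk y ys \<in> F' \<and> set (ctl xf ?mk ys) \<subseteq> F'" using Cons.IH Cons.prems q by auto
    ultimately show ?case using q by simp
  qed
  show "\<exists>n. \<forall>x ys. x \<in> F \<and> set ys \<subseteq> \<Phi> \<times> F \<and> length ys = n \<longrightarrow> gprod (tt i j) x ys = 0"
  proof (intro exI allI impI)
    fix x ys assume hx: "x \<in> F \<and> set ys \<subseteq> \<Phi> \<times> F \<and> length ys = n"
    have xf': "\<And>f. f \<in> F \<Longrightarrow> xf f \<in> Acar \<and> xf f i j = f" using xf XA by blast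
    have ys': "set ys \<subseteq> C j i \<times> F" using hx h by auto
    have "lprod pm (chd xf ?mk x ys) (ctl xf ?mk ys) = 0"
      by (rule n) (use inF' hx ctl_length in auto)
    then show "gprod (tt i j) x ys = 0" using conv[OF ij xf' _ ys'] hx by force
  qed
qed

end

fun pairs :: "'x list \<Rightarrow> ('x \<times> 'x) list" where
  "pairs (a # b # r) = (a, b) # pairs r"
| "pairs _ = []"

lemma pairs_len: "length xs = 2 * K \<Longrightarrow> length (pairs xs) = K \<and> concat (map (\<lambda>(a, b). [a, b]) (pairs xs)) = xs"
proof (induction K arbitrary: xs)
  case 0 then show ?case by simp
next
  case (Suc K)
  then obtain a b r where "xs = a # b # r" "length r = 2 * K"
    by (cases xs; cases "tl xs") auto
  then show ?case using Suc.IH by simp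
qed

lemma pairs_set: "set (pairs xs) \<subseteq> set xs \<times> set xs"
  by (induction xs rule: pairs.induct) auto

lemma concat_map_pair: "concat (map (\<lambda>(a, b). [h a, h b]) ps) = map h (concat (map (\<lambda>(a, b). [a, b]) ps))"
  by (induction ps) auto

context gmr
begin

definition okopt :: "'i \<Rightarrow> 'i \<Rightarrow> 'a option \<Rightarrow> bool" where
  "okopt i j u = (case u of None \<Rightarrow> i = j | Some c \<Rightarrow> c \<in> C j i)"

definition mo :: "'i \<Rightarrow> 'i \<Rightarrow> 'a \<Rightarrow> 'a option \<Rightarrow> 'a" where
  "mo i j n u = (case u of None \<Rightarrow> n | Some c \<Rightarrow> mu i j i n c)"

definition gam :: "'i \<Rightarrow> 'i \<Rightarrow> 'a option \<Rightarrow> 'a \<Rightarrow> 'a option \<Rightarrow> 'a" where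
  "gam i j u1 n u2 = (case u2 of None \<Rightarrow> (case u1 of None \<Rightarrow> n | Some c \<Rightarrow> mu j i j c n)
      | Some d \<Rightarrow> mu j j i (case u1 of None \<Rightarrow> n | Some c \<Rightarrow> mu j i j c n) d)"

lemma mo_closed: "i \<in> I \<Longrightarrow> j \<in> I \<Longrightarrow> n \<in> C i j \<Longrightarrow> okopt i j u \<Longrightarrow> mo i j n u \<in> C i i"
  unfolding okopt_def mo_def by (cases u) (auto intro: mu_closed)

lemma gam_closed: "i \<in> I \<Longrightarrow> j \<in> I \<Longrightarrow> n \<in> C i j \<Longrightarrow> okopt i j u1 \<Longrightarrow> okopt i j u2 \<Longrightarrow> gam i j u1 n u2 \<in> C j i"
  unfolding okopt_def gam_def by (cases u1; cases u2) (auto intro!: mu_closed)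

lemma mo_zero: "i \<in> I \<Longrightarrow> j \<in> I \<Longrightarrow> okopt i j u \<Longrightarrow> mo i j 0 u = 0"
  unfolding okopt_def mo_def by (cases u) (auto simp: mu_0l)

lemma KEY:
  assumes ij: "i \<in> I" "j \<in> I" and n: "n0 \<in> C i j" "n1 \<in> C i j" "W \<in> C i j"
    and u: "okopt i j u0" "okopt i j u1" "okopt i j U"
  shows "mu i i i (mo i j n0 u0) (mu i i i (mo i j n1 u1) (mo i j W U))
       = mo i j (mu i i j (mu i j i n0 (gam i j u0 n1 u1)) W) U"
  using ij n u unfolding okopt_def mo_def gam_def
  by (cases u0; cases u1; cases U) (auto simp: mu_assoc mu_closed)

lemma gprod_closed: "i \<in> I \<Longrightarrow> j \<in> I \<Longrightarrow> x \<in> C i j \<Longrightarrow> set ys \<subseteq> C j i \<times> C i j \<Longrightarrow> gprod (tt i j) x ys \<in> C i j"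
proof (induction ys arbitrary: x)
  case Nil then show ?case by simp
next
  case (Cons q ys) then show ?case by (cases q) (auto intro: tt_closed)
qed

fun glist :: "'i \<Rightarrow> 'i \<Rightarrow> 'a option \<Rightarrow> (('a \<times> 'a option) \<times> ('a \<times> 'a option)) list \<Rightarrow> ('a \<times> 'a) list" where
  "glist i j u0 [] = []"
| "glist i j u0 (((n1, u1), (n2, u2)) # ps) = (gam i j u0 n1 u1, n2) # glist i j u2 ps"

fun lastu :: "'a option \<Rightarrow> (('a \<times> 'a option) \<times> ('a \<times> 'a option)) list \<Rightarrow> 'a option" where
  "lastu u0 [] = u0"
| "lastu u0 ((q1, (n2, u2)) # ps) = lastu u2 ps"

lemma glist_len: "length (glist i j u0 ps) = length ps"
  by (induction ps arbitrary: u0) auto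

definition okq :: "'i \<Rightarrow> 'i \<Rightarrow> ('a \<times> 'a option) \<Rightarrow> bool" where
  "okq i j q = (fst q \<in> C i j \<and> okopt i j (snd q))"

lemma lastu_ok: "okopt i j u0 \<Longrightarrow> (\<forall>p\<in>set ps. okq i j (fst p) \<and> okq i j (snd p)) \<Longrightarrow> okopt i j (lastu u0 ps)"
proof (induction ps arbitrary: u0)
  case Nil then show ?case by simp
next
  case (Cons p ps)
  obtain q1 n2 u2 where p: "p = (q1, (n2, u2))" by (metis prod.collapse)
  then show ?case using Cons unfolding okq_def by auto
qed

lemma glist_set: "i \<in> I \<Longrightarrow> j \<in> I \<Longrightarrow> okopt i j u0 \<Longrightarrow> (\<forall>p\<in>set ps. okq i j (fst p) \<and> okq i j (snd p)) \<Longrightarrow>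
    set (glist i j u0 ps) \<subseteq> C j i \<times> C i j"
proof (induction ps arbitrary: u0)
  case Nil then show ?case by simp
next
  case (Cons p ps)
  obtain n1 u1 n2 u2 where p: "p = ((n1, u1), (n2, u2))" by (metis prod.collapse)
  then show ?case using Cons gam_closed unfolding okq_def by auto
qed

lemma regroup2:
  assumes ij: "i \<in> I" "j \<in> I" and n0: "n0 \<in> C i j" and u0: "okopt i j u0"
    and ps: "\<forall>p\<in>set ps. okq i j (fst p) \<and> okq i j (snd p)"
  shows "lprod (mu i i i) (mo i j n0 u0) (concat (map (\<lambda>(q1, q2). [mo i j (fst q1) (snd q1), mo i j (fst q2) (snd q2)]) ps))
      = mo i j (gprod (tt i j) n0 (glist i j u0 ps)) (lastu u0 ps)"
  using n0 u0 ps
proof (induction ps arbitrary: n0 u0)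
  case Nil then show ?case by simp
next
  case (Cons p ps)
  obtain n1 u1 n2 u2 where p: "p = ((n1, u1), (n2, u2))" by (metis prod.collapse)
  have h: "n1 \<in> C i j" "okopt i j u1" "n2 \<in> C i j" "okopt i j u2" "\<forall>p\<in>set ps. okq i j (fst p) \<and> okq i j (snd p)"
    using Cons.prems p unfolding okq_def by auto
  let ?W = "gprod (tt i j) n2 (glist i j u2 ps)"
  let ?U = "lastu u2 ps"
  have W: "?W \<in> C i j" using gprod_closed[OF ij h(3) glist_set[OF ij h(4) h(5)]] .
  have U: "okopt i j ?U" using lastu_ok[OF h(4) h(5)] .
  have "lprod (mu i i i) (mo i j n0 u0) (concat (map (\<lambda>(q1, q2). [mo i j (fst q1) (snd q1), mo i j (fst q2) (snd q2)]) (p # ps)))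
     = mu i i i (mo i j n0 u0) (mu i i i (mo i j n1 u1)
         (lprod (mu i i i) (mo i j n2 u2) (concat (map (\<lambda>(q1, q2). [mo i j (fst q1) (snd q1), mo i j (fst q2) (snd q2)]) ps))))"
    using p by simp
  also have "\<dots> = mu i i i (mo i j n0 u0) (mu i i i (mo i j n1 u1) (mo i j ?W ?U))"
    using Cons.IH[OF h(3) h(4) h(5)] by simp
  also have "\<dots> = mo i j (mu i i j (mu i j i n0 (gam i j u0 n1 u1)) ?W) ?U"
    by (rule KEY[OF ij Cons.prems(1) h(1) W Cons.prems(2) h(2) U])
  also have "mu i i j (mu i j i n0 (gam i j u0 n1 u1)) ?W = tt i j n0 (gam i j u0 n1 u1) ?W"
    by (rule tt_eq[symmetric])
  finally show ?case using p by simp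
qed

end

context gmr
begin

definition GenD :: "'i \<Rightarrow> 'i \<Rightarrow> 'a set \<Rightarrow> 'a set" where
  "GenD i j N = {mu i j i n g |n g. n \<in> N \<and> g \<in> C j i} \<union> {n. n \<in> N \<and> i = j}"

lemma GenD_sub: "i \<in> I \<Longrightarrow> j \<in> I \<Longrightarrow> N \<subseteq> C i j \<Longrightarrow> GenD i j N \<subseteq> C i i"
  unfolding GenD_def using mu_closed by blast

lemma GenD_locnil:
  assumes ij: "i \<in> I" "j \<in> I" and NC: "N \<subseteq> C i j" and Nn: "g_loc_nilpotent (C j i) (tt i j) N"
  shows "r_loc_nilpotent (mu i i i) (GenD i j N)"
  unfolding r_loc_nilpotent_def
proof (intro allI impI)
  fix F assume F: "finite F \<and> F \<subseteq> GenD i j N"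
  have ex: "\<exists>q. fst q \<in> N \<and> okopt i j (snd q) \<and> mo i j (fst q) (snd q) = f" if fG: "f \<in> GenD i j N" for f
  proof (cases "f \<in> {n. n \<in> N \<and> i = j}")
    case True then show ?thesis unfolding okopt_def mo_def by (intro exI[of _ "(f, None)"]) auto
  next
    case False
    then obtain n g where "f = mu i j i n g" "n \<in> N" "g \<in> C j i" using fG unfolding GenD_def by blast
    then show ?thesis unfolding okopt_def mo_def by (intro exI[of _ "(n, Some g)"]) auto
  qed
  define rep where "rep f = (SOME q. fst q \<in> N \<and> okopt i j (snd q) \<and> mo i j (fst q) (snd q) = f)" for f
  have rep: "fst (rep f) \<in> N \<and> okopt i j (snd (rep f)) \<and> mo i j (fst (rep f)) (snd (rep f)) = f" if "f \<in> F" for f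
    unfolding rep_def using someI_ex[OF ex] that F by blast
  define FN where "FN = fst ` rep ` F"
  define Phi where "Phi = (\<lambda>(f, g). gam i j (snd (rep f)) (fst (rep g)) (snd (rep g))) ` (F \<times> F)"
  have FN: "finite FN" "FN \<subseteq> N" unfolding FN_def using F rep by auto
  have Phi1: "finite Phi" unfolding Phi_def using F by simp
  have Phi2: "Phi \<subseteq> C j i"
  proof
    fix z assume "z \<in> Phi"
    then obtain a b where ab: "a \<in> F" "b \<in> F" "z = gam i j (snd (rep a)) (fst (rep b)) (snd (rep b))"
      unfolding Phi_def by auto
    have "fst (rep b) \<in> C i j" using rep[OF ab(2)] NC by blast
    then show "z \<in> C j i" using ab gam_closed[OF ij] rep by blast
  qed
  note Phi = Phi1 Phi2
  obtain K where K: "\<And>x ys. x \<in> FN \<Longrightarrow> set ys \<subseteq> Phi \<times> FN \<Longrightarrow> length ys = K \<Longrightarrow> gprod (tt i j) x ys = 0"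
    using Nn[unfolded g_loc_nilpotent_def, rule_format, of FN Phi] FN Phi by blast
  have gin: "set (glist i j u0 ps) \<subseteq> Phi \<times> FN"
    if "u0 \<in> snd ` rep ` F" "set ps \<subseteq> rep ` F \<times> rep ` F" for u0 ps
    using that
  proof (induction ps arbitrary: u0)
    case Nil then show ?case by simp
  next
    case (Cons p ps)
    obtain g1 g2 where g: "g1 \<in> F" "g2 \<in> F" "p = (rep g1, rep g2)" using Cons.prems by auto
    obtain f where f: "f \<in> F" "u0 = snd (rep f)" using Cons.prems by auto
    obtain n1 u1 where r1: "rep g1 = (n1, u1)" by force
    obtain n2 u2 where r2: "rep g2 = (n2, u2)" by force
    have "gam i j u0 n1 u1 \<in> Phi" unfolding Phi_def using f g r1 by (auto intro!: image_eqI[of _ _ "(f, g1)"])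
    moreover have "n2 \<in> FN" unfolding FN_def using g r2 by (auto intro!: image_eqI[of _ _ "rep g2"])
    moreover have "u2 \<in> snd ` rep ` F" using g r2 by (metis image_eqI snd_conv)
    moreover have "set ps \<subseteq> rep ` F \<times> rep ` F" using Cons.prems by auto
    ultimately have "set (glist i j u2 ps) \<subseteq> Phi \<times> FN" using Cons.IH by blast
    moreover have "gam i j u0 n1 u1 \<in> Phi" unfolding Phi_def using f g r1 by (auto intro!: image_eqI[of _ _ "(f, g1)"])
    moreover have "n2 \<in> FN" unfolding FN_def using g r2 by (auto intro!: image_eqI[of _ _ "rep g2"])
    ultimately show ?case using g r1 r2 by simp
  qed
  show "\<exists>n. \<forall>x xs. x \<in> F \<and> set xs \<subseteq> F \<and> length xs = n \<longrightarrow> lprod (mu i i i) x xs = 0"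
  proof (intro exI allI impI)
    fix x xs assume h: "x \<in> F \<and> set xs \<subseteq> F \<and> length xs = 2 * K"
    let ?h = "\<lambda>q. mo i j (fst q) (snd q)"
    let ?qs = "map rep xs"
    let ?ps = "pairs ?qs"
    have pl: "length ?ps = K" "concat (map (\<lambda>(a, b). [a, b]) ?ps) = ?qs" using pairs_len[of ?qs K] h by auto
    have "concat (map (\<lambda>(q1, q2). [mo i j (fst q1) (snd q1), mo i j (fst q2) (snd q2)]) ?ps) = map ?h ?qs"
      using concat_map_pair[of ?h ?ps] pl(2) by simp
    also have "\<dots> = xs"
    proof -
      have "map ?h (map rep ys) = ys" if "set ys \<subseteq> F" for ys using that rep by (induction ys) auto
      then show ?thesis using h by blast
    qed
    finally have flat: "concat (map (\<lambda>(q1, q2). [mo i j (fst q1) (snd q1), mo i j (fst q2) (snd q2)]) ?ps) = xs" .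
    have psset: "set ?ps \<subseteq> rep ` F \<times> rep ` F" using pairs_set[of ?qs] h by auto
    have psok: "\<forall>p\<in>set ?ps. okq i j (fst p) \<and> okq i j (snd p)"
      using psset rep NC unfolding okq_def by fastforce
    have xr: "fst (rep x) \<in> C i j" "okopt i j (snd (rep x))" using rep h NC by auto
    have "lprod (mu i i i) x xs = lprod (mu i i i) (mo i j (fst (rep x)) (snd (rep x)))
        (concat (map (\<lambda>(q1, q2). [mo i j (fst q1) (snd q1), mo i j (fst q2) (snd q2)]) ?ps))"
      using flat rep h by simp
    also have "\<dots> = mo i j (gprod (tt i j) (fst (rep x)) (glist i j (snd (rep x)) ?ps)) (lastu (snd (rep x)) ?ps)"
      by (rule regroup2[OF ij xr psok])
    also have "gprod (tt i j) (fst (rep x)) (glist i j (snd (rep x)) ?ps) = 0"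
    proof (rule K)
      show "fst (rep x) \<in> FN" unfolding FN_def using h by blast
      show "set (glist i j (snd (rep x)) ?ps) \<subseteq> Phi \<times> FN" using gin psset h by blast
      show "length (glist i j (snd (rep x)) ?ps) = K" using pl glist_len by simp
    qed
    also have "mo i j 0 (lastu (snd (rep x)) ?ps) = 0"
      using mo_zero[OF ij lastu_ok[OF xr(2) psok]] .
    finally show "lprod (mu i i i) x xs = 0" .
  qed
qed

definition LrowL :: "'i \<Rightarrow> 'i \<Rightarrow> 'a set \<Rightarrow> ('i \<Rightarrow> 'i \<Rightarrow> 'a) set" where
  "LrowL i j N = {x \<in> Acar. (\<forall>k l. k \<noteq> i \<longrightarrow> x k l = 0) \<and> x i i \<in> ac (GenD i j N) \<and>
      (\<forall>l\<in>I. \<forall>c\<in>C l i. mu i l i (x i l) c \<in> ac (GenD i j N))}"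

lemma row_prod:
  assumes x: "x \<in> Acar" and z: "z \<in> Acar" and zr: "\<And>k l. k \<noteq> i \<Longrightarrow> z k l = 0" and i: "i \<in> I" and l: "l \<in> I"
  shows "pm x z i l = mu i i l (x i i) (z i l)"
  by (rule pm_single[OF x z i i l]) (use zr in auto)

lemma lprod_row:
  assumes i: "i \<in> I" and x: "x \<in> Acar" "\<And>k l. k \<noteq> i \<Longrightarrow> x k l = 0"
    and xs: "\<And>y. y \<in> set xs \<Longrightarrow> y \<in> Acar \<and> (\<forall>k l. k \<noteq> i \<longrightarrow> y k l = 0)"
  shows "lprod pm x xs \<in> Acar \<and> (\<forall>k l. k \<noteq> i \<longrightarrow> lprod pm x xs k l = 0) \<and>
         lprod pm x xs i i = lprod (mu i i i) (x i i) (map (\<lambda>y. y i i) xs)"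
  using x xs
proof (induction xs arbitrary: x)
  case Nil then show ?case by simp
next
  case (Cons y ys)
  have y: "y \<in> Acar" "\<And>k l. k \<noteq> i \<Longrightarrow> y k l = 0" using Cons.prems by auto
  let ?W = "lprod pm y ys"
  have W: "?W \<in> Acar" "\<And>k l. k \<noteq> i \<Longrightarrow> ?W k l = 0" "?W i i = lprod (mu i i i) (y i i) (map (\<lambda>y. y i i) ys)"
    using Cons.IH[OF y] Cons.prems by auto
  have "pm x ?W \<in> Acar" using pm_closed Cons.prems W by blast
  moreover have "pm x ?W k l = 0" if "k \<noteq> i" for k l using row_prod_zero[OF Cons.prems(1) W(1)] Cons.prems(2) that by blast
  moreover have "pm x ?W i i = mu i i i (x i i) (?W i i)" by (rule row_prod[OF Cons.prems(1) W(1) W(2) i i])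
  ultimately show ?case using W(3) by simp
qed

end

context gmr
begin

lemma LrowL_props:
  assumes ij: "i \<in> I" "j \<in> I" and NC: "N \<subseteq> C i j" and Nn: "g_loc_nilpotent (C j i) (tt i j) N"
  shows "LrowL i j N \<subseteq> r_levitzki Acar pm"
proof -
  interpret A: rng Acar pm by (rule A_rng)
  interpret Ci: rng "C i i" "mu i i i" by (rule Cii_rng[OF ij(1)])
  have i: "i \<in> I" using ij by simp
  let ?D = "ac (GenD i j N)"
  have GC: "GenD i j N \<subseteq> C i i" using GenD_sub[OF ij NC] .
  have DC: "?D \<subseteq> C i i"
  proof
    fix x assume "x \<in> ?D" then show "x \<in> C i i"
    proof (induction x rule: ac.induct)
      case ac0 show ?case using C0 i by simp
    next
      case (acG g) then show ?case using GC by blast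
    next
      case (acD a b) then show ?case using Cdiff i by blast
    qed
  qed
  have Dn: "r_loc_nilpotent (mu i i i) ?D" using Ci.locnil_ac[OF GC GenD_locnil[OF ij NC Nn]] .
  let ?L = "LrowL i j N"
  have LA: "?L \<subseteq> Acar" unfolding LrowL_def by blast
  have L0: "0 \<in> ?L"
  proof -
    have "mu i l i 0 c = 0" if "l \<in> I" "c \<in> C l i" for l c using mu_0l i that by simp
    then show ?thesis unfolding LrowL_def using car_zero ac.ac0 by auto
  qed
  have Ld: "x - y \<in> ?L" if x: "x \<in> ?L" and y: "y \<in> ?L" for x y
  proof -
    have xA: "x \<in> Acar" and yA: "y \<in> Acar" using x y unfolding LrowL_def by auto
    show ?thesis
      unfolding LrowL_def
    proof (intro CollectI conjI allI impI ballI)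
      show "x - y \<in> Acar" using car_diff xA yA by blast
      fix k l assume "k \<noteq> i" then show "(x - y) k l = 0" using x y unfolding LrowL_def by auto
    next
      show "(x - y) i i \<in> ?D" using x y ac.acD unfolding LrowL_def by auto
    next
      fix l c assume l: "l \<in> I" and c: "c \<in> C l i"
      have "mu i l i ((x - y) i l) c = mu i l i (x i l) c - mu i l i (y i l) c"
        using mu_diffl[OF i l i car_entry[OF xA i l] car_entry[OF yA i l] c] by simp
      moreover have "mu i l i (x i l) c \<in> ?D" "mu i l i (y i l) c \<in> ?D" using x y l c unfolding LrowL_def by auto
      ultimately show "mu i l i ((x - y) i l) c \<in> ?D" using ac.acD by simp
    qed
  qed
  have Lr: "pm x r \<in> ?L" if x: "x \<in> ?L" and r: "r \<in> Acar" for x r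
  proof -
    have xA: "x \<in> Acar" using x unfolding LrowL_def by auto
    have xrow: "\<And>k l. k \<noteq> i \<Longrightarrow> x k l = 0" using x unfolding LrowL_def by auto
    have xc: "\<And>l c. l \<in> I \<Longrightarrow> c \<in> C l i \<Longrightarrow> mu i l i (x i l) c \<in> ?D" using x unfolding LrowL_def by auto
    have K: "finite (cs x)" "cs x \<subseteq> I" using cs_fin cs_sub xA by auto
    show "pm x r \<in> ?L"
      unfolding LrowL_def
    proof (intro CollectI conjI allI impI ballI)
      show "pm x r \<in> Acar" using pm_closed xA r by blast
      fix k l assume "k \<noteq> i" then show "pm x r k l = 0" using row_prod_zero[OF xA r] xrow by blast
    next
      have "pm x r i i = (\<Sum>m\<in>cs x. mu i m i (x i m) (r m i))"
        using pm_formula[OF xA r K subset_refl i i] .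
      also have "\<dots> \<in> ?D"
        by (rule ac_sum) (use xc K car_entry[OF r] i in auto)
      finally show "pm x r i i \<in> ?D" .
    next
      fix l c assume l: "l \<in> I" and c: "c \<in> C l i"
      have "mu i l i (pm x r i l) c = mu i l i (\<Sum>m\<in>cs x. mu i m l (x i m) (r m l)) c"
        using pm_formula[OF xA r K subset_refl i l] by simp
      also have "\<dots> = (\<Sum>m\<in>cs x. mu i l i (mu i m l (x i m) (r m l)) c)"
      proof (rule mu_suml[OF i l i _ c])
        fix m assume "m \<in> cs x" then have "m \<in> I" using K by blast
        then show "mu i m l (x i m) (r m l) \<in> C i l"
          using mu_closed[OF i _ l car_entry[OF xA i] car_entry[OF r _ l]] by blast
      qed
      also have "\<dots> = (\<Sum>m\<in>cs x. mu i m i (x i m) (mu m l i (r m l) c))"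
      proof (rule sum.cong[OF refl])
        fix m assume "m \<in> cs x" then have m: "m \<in> I" using K by blast
        show "mu i l i (mu i m l (x i m) (r m l)) c = mu i m i (x i m) (mu m l i (r m l) c)"
          by (rule mu_assoc[OF i m l i car_entry[OF xA i m] car_entry[OF r m l] c])
      qed
      also have "\<dots> \<in> ?D"
      proof (rule ac_sum)
        fix m assume "m \<in> cs x" then have m: "m \<in> I" using K by blast
        show "mu i m i (x i m) (mu m l i (r m l) c) \<in> ?D"
          using xc[OF m mu_closed[OF m l i car_entry[OF r m l] c]] .
      qed
      finally show "mu i l i (pm x r i l) c \<in> ?D" .
    qed
  qed
  have Ln: "r_loc_nilpotent pm ?L"
    unfolding r_loc_nilpotent_def
  proof (intro allI impI)
    fix F assume F: "finite F \<and> F \<subseteq> ?L"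
    have rowF: "y \<in> Acar \<and> (\<forall>k l. k \<noteq> i \<longrightarrow> y k l = 0)" if "y \<in> F" for y
    proof -
      have "y \<in> ?L" using F that by blast
      then show ?thesis unfolding LrowL_def by simp
    qed
    let ?Fd = "(\<lambda>y. y i i) ` F"
    have Fd1: "finite ?Fd" using F by blast
    have Fd2: "?Fd \<subseteq> ?D"
    proof
      fix z assume "z \<in> ?Fd"
      then obtain y where "y \<in> F" "z = y i i" by blast
      moreover have "y \<in> ?L" using F \<open>y \<in> F\<close> by blast
      ultimately show "z \<in> ?D" unfolding LrowL_def by simp
    qed
    note Fd = Fd1 Fd2
    have "\<exists>m. \<forall>x xs. x \<in> ?Fd \<and> set xs \<subseteq> ?Fd \<and> length xs = m \<longrightarrow> lprod (mu i i i) x xs = 0"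
      using Dn[unfolded r_loc_nilpotent_def, rule_format, of ?Fd] Fd(1) Fd(2) by fast
    then obtain m where m: "\<And>x xs. x \<in> ?Fd \<Longrightarrow> set xs \<subseteq> ?Fd \<Longrightarrow> length xs = m \<Longrightarrow> lprod (mu i i i) x xs = 0"
      by blast
    show "\<exists>n. \<forall>x xs. x \<in> F \<and> set xs \<subseteq> F \<and> length xs = n \<longrightarrow> lprod pm x xs = 0"
    proof (intro exI allI impI)
      fix x xs assume h: "x \<in> F \<and> set xs \<subseteq> F \<and> length xs = Suc m"
      obtain ys y where xs: "xs = ys @ [y]" using h by (cases xs rule: rev_exhaust) auto
      have ys: "set ys \<subseteq> F" "length ys = m" "y \<in> F" using h unfolding xs by auto
      have xr: "x \<in> Acar" "\<And>k l. k \<noteq> i \<Longrightarrow> x k l = 0" using rowF h by auto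
      have ysr: "\<And>z. z \<in> set ys \<Longrightarrow> z \<in> Acar \<and> (\<forall>k l. k \<noteq> i \<longrightarrow> z k l = 0)" using rowF ys by blast
      have yr: "y \<in> Acar" "\<And>k l. k \<noteq> i \<Longrightarrow> y k l = 0" using rowF ys by auto
      let ?Z = "lprod pm x ys"
      have Z: "?Z \<in> Acar" "\<And>k l. k \<noteq> i \<Longrightarrow> ?Z k l = 0" "?Z i i = lprod (mu i i i) (x i i) (map (\<lambda>y. y i i) ys)"
        using lprod_row[OF i xr ysr] by auto
      have "lprod (mu i i i) (x i i) (map (\<lambda>y. y i i) ys) = 0"
        by (rule m) (use h ys in auto)
      then have "?Z i i = 0" using Z(3) by simp
      have "lprod pm x xs = pm ?Z y" unfolding xs using A.lprod_snoc[OF xr(1) _ yr(1)] ysr by blast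
      also have "pm ?Z y = 0"
      proof (rule ext, rule ext)
        fix k l
        show "pm ?Z y k l = 0 k l"
        proof (cases "k = i \<and> l \<in> I")
          case True
          then have "pm ?Z y k l = mu i i l (?Z i i) (y i l)" using row_prod[OF Z(1) yr(1) yr(2) i] by simp
          then show ?thesis using \<open>?Z i i = 0\<close> mu_0l[OF i i _ car_entry[OF yr(1) i]] True by simp
        next
          case False
          then show ?thesis
          proof (cases "k = i")
            case True then have "l \<notin> I" using False by blast
            then show ?thesis using pm_out by simp
          next
            case False then show ?thesis using row_prod_zero[OF Z(1) yr(1)] Z(2) by simp
          qed
        qed
      qed
      finally show "lprod pm x xs = 0" .
    qed
  qed
  show ?thesis by (rule A.locnil_right_ideal[OF LA L0 Ld Lr Ln])
qed

lemma E_in_Lev: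
  assumes ij: "i \<in> I" "j \<in> I" and NC: "N \<subseteq> C i j" and Nn: "g_loc_nilpotent (C j i) (tt i j) N" and n: "n \<in> N"
  shows "E i j n \<in> r_levitzki Acar pm"
proof -
  have nC: "n \<in> C i j" using n NC by blast
  have "E i j n \<in> LrowL i j N"
    unfolding LrowL_def
  proof (intro CollectI conjI allI impI ballI)
    show "E i j n \<in> Acar" using E_car[OF ij nC] .
    fix k l assume "k \<noteq> i" then show "E i j n k l = 0" by (simp add: E_def)
  next
    show "E i j n i i \<in> ac (GenD i j N)"
    proof (cases "i = j")
      case True
      then have "n \<in> GenD i j N" unfolding GenD_def using n by blast
      then show ?thesis using True by (simp add: E_def ac.acG)
    next
      case False then show ?thesis by (simp add: E_def ac.ac0)
    qed
  next
    fix l c assume l: "l \<in> I" and c: "c \<in> C l i"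
    show "mu i l i (E i j n i l) c \<in> ac (GenD i j N)"
    proof (cases "l = j")
      case True
      then have "mu i l i n c \<in> GenD i j N" unfolding GenD_def using n c by blast
      then show ?thesis using True by (simp add: E_def ac.acG)
    next
      case False then show ?thesis using mu_0l[OF ij(1) l ij(1) c] by (simp add: E_def ac.ac0)
    qed
  qed
  then show ?thesis using LrowL_props[OF ij NC Nn] by blast
qed

lemma lev_eq_gm: "r_levitzki Acar pm = gm_sum I C (comp_rad Levitzki C mu)"
proof -
  interpret A: rng Acar pm by (rule A_rng)
  let ?L = "r_levitzki Acar pm"
  show ?thesis
  proof
    show "?L \<subseteq> gm_sum I C (comp_rad Levitzki C mu)"
    proof
      fix x assume x: "x \<in> ?L"
      have xA: "x \<in> Acar" using x A.ideal_sub[OF A.lev_ideal] by blast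
      have xs: "x \<in> ac (\<Union>{J. r_ideal Acar pm J \<and> r_loc_nilpotent pm J})" using x A.lev_sub_ac by blast
      have "\<forall>i\<in>I. \<forall>j\<in>I. x i j \<in> g_levitzki (C i j) (C j i) (tt i j)"
        using xs
      proof (induction x rule: ac.induct)
        case ac0 then show ?case using gid_0[OF glev_gideal] by simp
      next
        case (acG g)
        then obtain X where X: "r_ideal Acar pm X" "r_loc_nilpotent pm X" "g \<in> X" by blast
        show ?case
        proof (intro ballI)
          fix i j assume ij: "i \<in> I" "j \<in> I"
          have "Pr i j X \<subseteq> g_levitzki (C i j) (C j i) (tt i j)"
            by (rule glev_ge[OF Pr_gideal[OF X(1) ij] Pr_locnil[OF X(1) X(2) ij]])
          moreover have "g i j \<in> Pr i j X" unfolding Pr_def using X(3) by blast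
          ultimately show "g i j \<in> g_levitzki (C i j) (C j i) (tt i j)" by blast
        qed
      next
        case (acD a b)
        then show ?case using gid_diff[OF glev_gideal] by simp
      qed
      then show "x \<in> gm_sum I C (comp_rad Levitzki C mu)"
        unfolding gm_sum_def comp_rad_def using xA by simp
    qed
  next
    show "gm_sum I C (comp_rad Levitzki C mu) \<subseteq> ?L"
    proof
      fix x assume x: "x \<in> gm_sum I C (comp_rad Levitzki C mu)"
      have xA: "x \<in> Acar" and xc: "\<And>i j. i \<in> I \<Longrightarrow> j \<in> I \<Longrightarrow> x i j \<in> g_levitzki (C i j) (C j i) (tt i j)"
        using x unfolding gm_sum_def comp_rad_def by auto
      show "x \<in> ?L"
      proof (rule decomp_ideal[OF A.lev_ideal xA])
        fix i j assume ij: "i \<in> I" "j \<in> I"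
        have "g_levitzki (C i j) (C j i) (tt i j) \<subseteq> {z \<in> C i j. E i j z \<in> ?L}"
        proof (rule glev_le[OF proj_gideal[OF A.lev_ideal ij]])
          fix N assume N: "g_ideal (C i j) (C j i) (tt i j) N" and Nn: "g_loc_nilpotent (C j i) (tt i j) N"
          have NC: "N \<subseteq> C i j" using gid_sub[OF N] .
          show "N \<subseteq> {z \<in> C i j. E i j z \<in> ?L}" using E_in_Lev[OF ij NC Nn] NC by blast
        qed
        then show "E i j (x i j) \<in> ?L" using xc[OF ij] by blast
      qed
    qed
  qed
qed

end

lemma comp_rad_sub: "comp_rad k C mu i j \<subseteq> C i j"
  unfolding comp_rad_def by (cases k) (simp_all add: g_baer_def g_levitzki_def g_jacobson_def Int_lower1)

theorem theorem2p4:
  fixes I :: "'i set" and C :: "'i \<Rightarrow> 'i \<Rightarrow> 'a::ab_group_add set"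
    and mu :: "'i \<Rightarrow> 'i \<Rightarrow> 'i \<Rightarrow> 'a \<Rightarrow> 'a \<Rightarrow> 'a" and k :: rad_kind
  assumes "gm_ring I C mu"
  shows "gm_rad k I C mu = gm_part_rad k I C mu \<and>
         gm_part_rad k I C mu = gm_sum I C (comp_rad k C mu)"
proof -
  interpret gmr I C mu by (rule gmr.intro[OF assms])
  interpret A: rng "gm_carrier I C" "gm_mult I mu" by (rule A_rng)
  let ?R = "gm_rad k I C mu"
  have eq: "?R = gm_sum I C (comp_rad k C mu)"
  proof (cases k)
    case Baer then show ?thesis using baer_eq by (simp add: gm_rad_def)
  next
    case Levitzki then show ?thesis using lev_eq_gm by (simp add: gm_rad_def)
  next
    case Jacobson then show ?thesis using jac_eq_gm by (simp add: gm_rad_def)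
  qed
  have id: "r_ideal (gm_carrier I C) (gm_mult I mu) ?R"
  proof (cases k)
    case Baer
    have "r_ideal (gm_carrier I C) (gm_mult I mu) (r_baer (gm_carrier I C) (gm_mult I mu))"
      unfolding r_baer_def by (rule A.ideal_Inter) (simp add: r_prime_ideal_def)
    then show ?thesis using Baer by (simp add: gm_rad_def)
  next
    case Levitzki then show ?thesis using A.lev_ideal by (simp add: gm_rad_def)
  next
    case Jacobson then show ?thesis using A.jac_ideal by (simp add: gm_rad_def)
  qed
  have s1: "(\<forall>i\<in>I. \<forall>j\<in>I. comp_rad k C mu i j \<subseteq> C i j) \<and> ?R = gm_sum I C (comp_rad k C mu)"
  proof (intro conjI ballI)
    fix i j show "comp_rad k C mu i j \<subseteq> C i j" by (rule comp_rad_sub)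
  next
    show "?R = gm_sum I C (comp_rad k C mu)" by (rule eq)
  qed
  then have s2: "\<exists>S. (\<forall>i\<in>I. \<forall>j\<in>I. S i j \<subseteq> C i j) \<and> ?R = gm_sum I C S" by (intro exI[where x="comp_rad k C mu"])
  have gmi: "gm_ideal I C mu ?R"
    unfolding gm_ideal_def by (rule conjI[OF id s2])
  have P: "gm_ideal I C mu ?R \<and> ?R \<subseteq> ?R \<and> (\<forall>B'. gm_ideal I C mu B' \<and> B' \<subseteq> ?R \<longrightarrow> B' \<subseteq> ?R)"
    using gmi by blast
  have "gm_part_rad k I C mu = ?R"
    unfolding gm_part_rad_def
  proof (rule the_equality)
    show "gm_ideal I C mu ?R \<and> ?R \<subseteq> ?R \<and> (\<forall>B'. gm_ideal I C mu B' \<and> B' \<subseteq> ?R \<longrightarrow> B' \<subseteq> ?R)"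
      by (rule P)
    fix B assume B: "gm_ideal I C mu B \<and> B \<subseteq> ?R \<and> (\<forall>B'. gm_ideal I C mu B' \<and> B' \<subseteq> ?R \<longrightarrow> B' \<subseteq> B)"
    then have "?R \<subseteq> B" using gmi by blast
    then show "B = ?R" using B by blast
  qed
  then show ?thesis using eq by simp
qed

end
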